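(* Let $q\in K$. The linear map $\theta_q:\mathcal{H}_{\mathbb{T}}\to\mathcal{H}_{\mathcal{SP}}$, $\theta_q(\mathcal{T})=q^{c(\mathcal{T})}\,\overline{\mathcal{T}}$, is a surjective morphism of Hopf 2-associative algebras; that is, $\theta_q$ is surjective, $\theta_q(1)=1$, $\theta_q(x.y)=\theta_q(x).\theta_q(y)$, $\theta_q(x\downarrow y)=\theta_q(x)\downarrow\theta_q(y)$, and $\Delta\circ\theta_q=(\theta_q\otimes\theta_q)\circ\Delta$.
   Context: Let $K$ be a field. For $n\geq0$, $[n]=\{1,\ldots,n\}$, $\mathbb{T}_n$ is the set of topologies on $[n]$ and $\mathcal{H}_{\mathbb{T}}$ is the $K$-vector space with basis $\bigsqcup_n\mathbb{T}_n$; $1$ denotes the empty topology. For a topology $\mathcal{T}$ on finite $X$: $i\leq_{\mathcal{T}}j$ iff every open set containing $i$ contains $j$ (the open sets are exactly the subsets $I$ with $i\in I, i\leq_{\mathcal{T}}j\Rightarrow j\in I$); $i\sim_{\mathcal{T}}j$ iff $i\leq_{\mathcal{T}}j$ and $j\leq_{\mathcal{T}}i$. For $Y\subseteq X$, $\mathcal{T}_{\mid Y}=\{O\cap Y\mid O\in\mathcal{T}\}$; if $X$ is totally ordered of size $m$, $\mathrm{Std}(\mathcal{T})\in\mathbb{T}_m$ is the transport of $\mathcal{T}$ along the increasing bijection $X\to[m]$. For $O\subseteq\mathbb{N}$, $O(+n)=\{k+n\mid k\in O\}$. Products on $\mathcal{H}_{\mathbb{T}}$ (bilinear): for $\mathcal{T}\in\mathbb{T}_n,\mathcal{T}'\in\mathbb{T}_{n'}$,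 $\mathcal{T}.\mathcal{T}'$ has open sets $O\sqcup O'(+n)$, and $\mathcal{T}\downarrow\mathcal{T}'$ has open sets $O\sqcup[n'](+n)$ and $O'(+n)$ ($O\in\mathcal{T},O'\in\mathcal{T}'$). Coproduct: $\Delta(\mathcal{T})=\sum_{O\in\mathcal{T}}\mathrm{Std}(\mathcal{T}_{\mid[n]\setminus O})\otimes\mathrm{Std}(\mathcal{T}_{\mid O})$. A topology is $T_0$ if $\sim_{\mathcal{T}}$ is equality. $\mathcal{H}_{\mathcal{SP}}$ is the subspace of $\mathcal{H}_{\mathbb{T}}$ spanned by $T_0$ topologies; it is stable under $.$, $\downarrow$ and $\Delta$. For $\mathcal{T}\in\mathbb{T}_n$ with $\sim_{\mathcal{T}}$-classes $C_1,\ldots,C_k$ numbered so that $\min C_1<\cdots<\min C_k$, $\overline{\mathcal{T}}$ is the $T_0$ topology on $[k]$ whose preorder is $a\leq b$ iff $x\leq_{\mathcal{T}}y$ for $x\in C_a,y\in C_b$; and $c(\mathcal{T})=n-k$. Convention $q^0=1$ (also for $q=0$). *)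

theory Defs
  imports Main "HOL-Library.Poly_Mapping"
begin

text \<open>A basis element of H_T is a pair (n, T) with T a topology on [n] = {1..n}.\<close>
type_synonym topo = "nat \<times> nat set set"

definition is_top :: "nat \<Rightarrow> nat set set \<Rightarrow> bool" where
  "is_top n T \<longleftrightarrow> T \<subseteq> Pow {1..n} \<and> {} \<in> T \<and> {1..n} \<in> T \<and>
     (\<forall>A\<in>T. \<forall>B\<in>T. A \<union> B \<in> T \<and> A \<inter> B \<in> T)"

definition topologies :: "topo set" where
  "topologies = {(n, T). is_top n T}"

definition tle :: "nat set set \<Rightarrow> nat \<Rightarrow> nat \<Rightarrow> bool" where
  "tle T i j \<longleftrightarrow> (\<forall>U\<in>T. i \<in> U \<longrightarrow> j \<in> U)"

definition tequiv :: "nat set set \<Rightarrow> nat \<Rightarrow> nat \<Rightarrow> bool" where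
  "tequiv T i j \<longleftrightarrow> tle T i j \<and> tle T j i"

definition is_T0 :: "topo \<Rightarrow> bool" where
  "is_T0 t \<longleftrightarrow> (\<forall>i\<in>{1..fst t}. \<forall>j\<in>{1..fst t}. tequiv (snd t) i j \<longrightarrow> i = j)"

definition T0_topologies :: "topo set" where
  "T0_topologies = {t \<in> topologies. is_T0 t}"

definition H_T :: "(topo \<Rightarrow>\<^sub>0 'k::field) set" where
  "H_T = {x. Poly_Mapping.keys x \<subseteq> topologies}"

definition H_SP :: "(topo \<Rightarrow>\<^sub>0 'k::field) set" where
  "H_SP = {x. Poly_Mapping.keys x \<subseteq> T0_topologies}"

text \<open>Tensor square H_T \<otimes> H_T, with basis the pairs of basis elements.\<close>
definition H_T2 :: "(topo \<times> topo \<Rightarrow>\<^sub>0 'k::field) set" where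
  "H_T2 = {x. Poly_Mapping.keys x \<subseteq> topologies \<times> topologies}"

definition one_T :: "topo \<Rightarrow>\<^sub>0 'k::field" where
  "one_T = Poly_Mapping.single (0, {{}}) 1"

definition conc_top :: "topo \<Rightarrow> topo \<Rightarrow> topo" where
  "conc_top t t' = (fst t + fst t',
     {U \<union> (\<lambda>k. k + fst t) ` U' | U U'. U \<in> snd t \<and> U' \<in> snd t'})"

definition down_top :: "topo \<Rightarrow> topo \<Rightarrow> topo" where
  "down_top t t' = (fst t + fst t',
     {U \<union> (\<lambda>k. k + fst t) ` {1..fst t'} | U. U \<in> snd t} \<union>
     {(\<lambda>k. k + fst t) ` U' | U'. U' \<in> snd t'})"

definition bilin :: "(topo \<Rightarrow> topo \<Rightarrow> topo) \<Rightarrow> (topo \<Rightarrow>\<^sub>0 'k::field) \<Rightarrow> (topo \<Rightarrow>\<^sub>0 'k) \<Rightarrow> (topo \<Rightarrow>\<^sub>0 'k)" where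
  "bilin f x y = (\<Sum>a\<in>Poly_Mapping.keys x. \<Sum>b\<in>Poly_Mapping.keys y. Poly_Mapping.single (f a b) (Poly_Mapping.lookup x a * Poly_Mapping.lookup y b))"

definition conc_prod :: "(topo \<Rightarrow>\<^sub>0 'k::field) \<Rightarrow> (topo \<Rightarrow>\<^sub>0 'k) \<Rightarrow> (topo \<Rightarrow>\<^sub>0 'k)" where
  "conc_prod = bilin conc_top"

definition down_prod :: "(topo \<Rightarrow>\<^sub>0 'k::field) \<Rightarrow> (topo \<Rightarrow>\<^sub>0 'k) \<Rightarrow> (topo \<Rightarrow>\<^sub>0 'k)" where
  "down_prod = bilin down_top"

text \<open>Std(T restricted to Y), Y \<subseteq> [n], via the increasing bijection Y \<rightarrow> [card Y].\<close>
definition rank_in :: "nat set \<Rightarrow> nat \<Rightarrow> nat" where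
  "rank_in Y y = card {z \<in> Y. z \<le> y}"

definition std_restr :: "nat set set \<Rightarrow> nat set \<Rightarrow> topo" where
  "std_restr T Y = (card Y, {rank_in Y ` U | U. U \<in> {W \<inter> Y | W. W \<in> T}})"

definition coprod :: "(topo \<Rightarrow>\<^sub>0 'k::field) \<Rightarrow> (topo \<times> topo \<Rightarrow>\<^sub>0 'k)" where
  "coprod x = (\<Sum>a\<in>Poly_Mapping.keys x. \<Sum>U\<in>snd a.
     Poly_Mapping.single (std_restr (snd a) ({1..fst a} - U), std_restr (snd a) U) (Poly_Mapping.lookup x a))"

text \<open>Quotient T0 topology: classes numbered by increasing minima.\<close>
definition tclass :: "topo \<Rightarrow> nat \<Rightarrow> nat set" where
  "tclass t i = {j \<in> {1..fst t}. tequiv (snd t) i j}"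

definition class_mins :: "topo \<Rightarrow> nat set" where
  "class_mins t = {Min (tclass t i) | i. i \<in> {1..fst t}}"

definition nclasses :: "topo \<Rightarrow> nat" where
  "nclasses t = card (class_mins t)"

definition class_idx :: "topo \<Rightarrow> nat \<Rightarrow> nat" where
  "class_idx t i = card {r \<in> class_mins t. r \<le> Min (tclass t i)}"

definition bar_le :: "topo \<Rightarrow> nat \<Rightarrow> nat \<Rightarrow> bool" where
  "bar_le t a b \<longleftrightarrow> (\<forall>x\<in>{1..fst t}. \<forall>y\<in>{1..fst t}.
      class_idx t x = a \<longrightarrow> class_idx t y = b \<longrightarrow> tle (snd t) x y)"

definition bar_top :: "topo \<Rightarrow> topo" where
  "bar_top t = (nclasses t,
     {I. I \<subseteq> {1..nclasses t} \<and> (\<forall>a\<in>I. \<forall>b\<in>{1..nclasses t}. bar_le t a b \<longrightarrow> b \<in> I)})"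

definition cdef :: "topo \<Rightarrow> nat" where
  "cdef t = fst t - nclasses t"

definition theta :: "'k::field \<Rightarrow> (topo \<Rightarrow>\<^sub>0 'k) \<Rightarrow> (topo \<Rightarrow>\<^sub>0 'k)" where
  "theta q x = (\<Sum>a\<in>Poly_Mapping.keys x. Poly_Mapping.single (bar_top a) (Poly_Mapping.lookup x a * q ^ cdef a))"

definition theta2 :: "'k::field \<Rightarrow> (topo \<times> topo \<Rightarrow>\<^sub>0 'k) \<Rightarrow> (topo \<times> topo \<Rightarrow>\<^sub>0 'k)" where
  "theta2 q z = (\<Sum>p\<in>Poly_Mapping.keys z. Poly_Mapping.single (bar_top (fst p), bar_top (snd p))
       (Poly_Mapping.lookup z p * q ^ cdef (fst p) * q ^ cdef (snd p)))"

end

theory Submission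
  imports Defs
begin

definition linext :: "('a \<Rightarrow> 'k::field \<Rightarrow> 'b::cancel_comm_monoid_add) \<Rightarrow> ('a \<Rightarrow>\<^sub>0 'k) \<Rightarrow> 'b" where
  "linext F x = (\<Sum>a\<in>Poly_Mapping.keys x. F a (Poly_Mapping.lookup x a))"

definition additive :: "('a \<Rightarrow> 'k::field \<Rightarrow> 'b::cancel_comm_monoid_add) \<Rightarrow> bool" where
  "additive F \<longleftrightarrow> (\<forall>a c d. F a (c + d) = F a c + F a d)"

lemma additive_zero: "additive F \<Longrightarrow> F a 0 = 0"
  unfolding additive_def by (metis add.right_neutral add_left_cancel)

lemma linext_ext:
  assumes "finite S" "Poly_Mapping.keys x \<subseteq> S" "additive F"
  shows "linext F x = (\<Sum>a\<in>S. F a (Poly_Mapping.lookup x a))"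
  unfolding linext_def
  by (rule sum.mono_neutral_left) (use assms additive_zero in \<open>auto simp: in_keys_iff\<close>)

lemma linext_add:
  assumes "additive F"
  shows "linext F (x + y) = linext F x + linext F y"
proof -
  let ?S = "Poly_Mapping.keys x \<union> Poly_Mapping.keys y \<union> Poly_Mapping.keys (x+y)"
  have "linext F (x + y) = (\<Sum>a\<in>?S. F a (Poly_Mapping.lookup (x+y) a))"
    by (rule linext_ext) (use assms in auto)
  also have "\<dots> = (\<Sum>a\<in>?S. F a (Poly_Mapping.lookup x a)) + (\<Sum>a\<in>?S. F a (Poly_Mapping.lookup y a))"
    using assms by (simp add: lookup_add additive_def sum.distrib)
  also have "\<dots> = linext F x + linext F y"
    by (subst (1 2) linext_ext[of ?S]) (use assms in auto)
  finally show ?thesis .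
qed

lemma linext_zero: "linext F 0 = 0"
  unfolding linext_def by simp

lemma linext_single:
  assumes "additive F"
  shows "linext F (Poly_Mapping.single a c) = F a c"
  by (subst linext_ext[of "{a}"]) (use assms in auto)

lemma linext_sum:
  assumes "additive F"
  shows "linext F (\<Sum>i\<in>I. g i) = (\<Sum>i\<in>I. linext F (g i))"
proof (cases "finite I")
  case True
  then show ?thesis by (induction I rule: finite_induct) (auto simp: linext_zero linext_add assms)
qed (simp add: linext_zero)

lemma sum_monomials: "(\<Sum>a\<in>Poly_Mapping.keys x. Poly_Mapping.single a (Poly_Mapping.lookup x a)) = x"
proof -
  have "Poly_Mapping.lookup (\<Sum>a\<in>Poly_Mapping.keys x. Poly_Mapping.single a (Poly_Mapping.lookup x a)) b
       = Poly_Mapping.lookup x b" for b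
  proof -
    have "Poly_Mapping.lookup (\<Sum>a\<in>Poly_Mapping.keys x. Poly_Mapping.single a (Poly_Mapping.lookup x a)) b
       = (\<Sum>a\<in>Poly_Mapping.keys x. (if a = b then Poly_Mapping.lookup x a else 0))"
      unfolding lookup_sum by (rule sum.cong) (auto simp: lookup_single when_def)
    also have "\<dots> = (if b \<in> Poly_Mapping.keys x then Poly_Mapping.lookup x b else 0)"
      by (simp only: sum.delta finite_keys)
    also have "\<dots> = Poly_Mapping.lookup x b" by (auto simp: in_keys_iff)
    finally show ?thesis .
  qed
  then show ?thesis by (simp add: poly_mapping_eq_iff fun_eq_iff)
qed

lemma additive_single: "additive (\<lambda>a c. Poly_Mapping.single (g a) (c * w a))"
  by (simp add: additive_def distrib_right single_add)

lemma theta_linext: "theta q = linext (\<lambda>a c. Poly_Mapping.single (bar_top a) (c * q ^ cdef a))"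
  by (rule ext) (simp add: theta_def linext_def)

lemma theta2_linext: "theta2 q = linext (\<lambda>p c. Poly_Mapping.single (bar_top (fst p), bar_top (snd p)) (c * (q ^ cdef (fst p) * q ^ cdef (snd p))))"
  by (rule ext) (simp add: theta2_def linext_def mult.assoc)

lemma coprod_linext: "coprod = linext (\<lambda>a c. \<Sum>U\<in>snd a.
     Poly_Mapping.single (std_restr (snd a) ({1..fst a} - U), std_restr (snd a) U) c)"
  by (rule ext) (simp add: coprod_def linext_def)

lemma additive_coprod: "additive (\<lambda>a c. \<Sum>U\<in>snd a.
     Poly_Mapping.single (std_restr (snd a) ({1..fst a} - U), std_restr (snd a) U) c)"
  by (simp add: additive_def single_add sum.distrib)

lemma bilin_linext: "bilin h x y = linext (\<lambda>a c. linext (\<lambda>b d. Poly_Mapping.single (h a b) (c * d)) y) x"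
  by (simp add: bilin_def linext_def)

lemma additive_bilin_in: "additive (\<lambda>b d. Poly_Mapping.single (h a b) ((c::'k::field) * d))"
  by (simp add: additive_def distrib_left single_add)

lemma additive_bilin_out: "additive (\<lambda>a c. linext (\<lambda>b d. Poly_Mapping.single (h a b) ((c::'k::field) * d)) y)"
  unfolding additive_def linext_def by (simp add: distrib_right single_add sum.distrib)

lemma bilin_add1: "bilin h (x + x') y = bilin h x y + bilin h x' y"
  unfolding bilin_linext by (rule linext_add[OF additive_bilin_out])

lemma bilin_add2: "bilin h x (y + y') = bilin h x y + bilin h x y'"
proof -
  have "\<And>a c. linext (\<lambda>b d. Poly_Mapping.single (h a b) (c * d)) (y+y') = linext (\<lambda>b d. Poly_Mapping.single (h a b) (c * d)) y + linext (\<lambda>b d. Poly_Mapping.single (h a b) (c * d)) y'"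
    by (rule linext_add[OF additive_bilin_in])
  then show ?thesis unfolding bilin_linext by (simp add: linext_def[where x=x] sum.distrib)
qed

lemma bilin_zero1: "bilin h 0 y = 0" by (simp add: bilin_def)
lemma bilin_zero2: "bilin h x 0 = 0" by (simp add: bilin_def)

lemma bilin_sum1: "bilin h (\<Sum>i\<in>I. g i) y = (\<Sum>i\<in>I. bilin h (g i) y)"
proof (cases "finite I")
  case True
  then show ?thesis by (induction I rule: finite_induct) (auto simp: bilin_zero1 bilin_add1)
qed (simp add: bilin_zero1)

lemma bilin_sum2: "bilin h x (\<Sum>i\<in>I. g i) = (\<Sum>i\<in>I. bilin h x (g i))"
proof (cases "finite I")
  case True
  then show ?thesis by (induction I rule: finite_induct) (auto simp: bilin_zero2 bilin_add2)
qed (simp add: bilin_zero2)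

lemma bilin_single: "bilin h (Poly_Mapping.single a c) (Poly_Mapping.single b d) = Poly_Mapping.single (h a b) (c * d)"
  by (cases "c = 0"; cases "d = 0") (simp_all add: bilin_def)

lemma tle_refl: "tle T i i" by (simp add: tle_def)
lemma tle_trans: "tle T i j \<Longrightarrow> tle T j k \<Longrightarrow> tle T i k" by (auto simp: tle_def)
lemma tequiv_refl: "tequiv T i i" by (simp add: tequiv_def tle_refl)
lemma tequiv_sym: "tequiv T i j \<Longrightarrow> tequiv T j i" by (simp add: tequiv_def)
lemma tequiv_trans: "tequiv T i j \<Longrightarrow> tequiv T j k \<Longrightarrow> tequiv T i k"
  by (auto simp: tequiv_def intro: tle_trans)

lemma is_topD:
  assumes "is_top n T"
  shows "T \<subseteq> Pow {1..n}" "{} \<in> T" "{1..n} \<in> T"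
    "A \<in> T \<Longrightarrow> B \<in> T \<Longrightarrow> A \<union> B \<in> T" "A \<in> T \<Longrightarrow> B \<in> T \<Longrightarrow> A \<inter> B \<in> T"
  using assms by (auto simp: is_top_def)

lemma open_sub: "is_top n T \<Longrightarrow> U \<in> T \<Longrightarrow> U \<subseteq> {1..n}"
  using is_topD(1)[of n T] by blast

lemma tle_in: "is_top n T \<Longrightarrow> i \<in> {1..n} \<Longrightarrow> tle T i j \<Longrightarrow> j \<in> {1..n}"
  using is_topD(3)[of n T] by (auto simp: tle_def)

lemma open_up: "U \<in> T \<Longrightarrow> i \<in> U \<Longrightarrow> tle T i j \<Longrightarrow> j \<in> U"
  by (auto simp: tle_def)

lemma finite_top: "is_top n T \<Longrightarrow> finite T"
  using is_topD(1)[of n T] finite_Pow_iff[of "{1..n}"] finite_atLeastAtMost[of 1 n] finite_subset by blast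

lemma top_Union: assumes "is_top n T" "finite F" "F \<subseteq> T" shows "\<Union>F \<in> T"
  using assms(2,3)
proof (induction F rule: finite_induct)
  case empty
  then show ?case using is_topD(2)[OF assms(1)] by simp
next
  case (insert x F)
  then show ?case using is_topD(4)[OF assms(1), of x "\<Union>F"] by simp
qed

lemma top_Inter: assumes "is_top n T" "finite F" "F \<noteq> {}" "F \<subseteq> T" shows "\<Inter>F \<in> T"
  using assms(2,3,4)
proof (induction F rule: finite_ne_induct)
  case (insert x F)
  then show ?case using is_topD(5)[OF assms(1), of x "\<Inter>F"] by simp
qed simp

lemma alexandrov:
  assumes T: "is_top n T" and sub: "U \<subseteq> {1..n}" and up: "\<forall>i\<in>U. \<forall>j. tle T i j \<longrightarrow> j \<in> U"
  shows "U \<in> T"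
proof -
  define N where "N i = \<Inter>{V\<in>T. i \<in> V}" for i
  have NT: "N i \<in> T" if "i \<in> U" for i
    unfolding N_def
  proof (rule top_Inter[OF T])
    show "finite {V \<in> T. i \<in> V}" using finite_top[OF T] by simp
    show "{V \<in> T. i \<in> V} \<noteq> {}" using is_topD(3)[OF T] that sub by blast
  qed auto
  have NU: "N i \<subseteq> U" if "i \<in> U" for i
  proof
    fix j assume "j \<in> N i"
    then have "tle T i j" by (auto simp: N_def tle_def)
    then show "j \<in> U" using up that by blast
  qed
  have "U = \<Union>(N ` U)"
  proof
    show "U \<subseteq> \<Union>(N ` U)" by (auto simp: N_def)
    show "\<Union>(N ` U) \<subseteq> U" using NU by blast
  qed
  moreover have "\<Union>(N ` U) \<in> T"
    by (rule top_Union[OF T]) (use NT finite_subset[OF sub] in auto)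
  ultimately show ?thesis by simp
qed

lemma rank_mono: "finite Y \<Longrightarrow> y \<le> y' \<Longrightarrow> rank_in Y y \<le> rank_in Y y'"
  unfolding rank_in_def by (rule card_mono) auto

lemma rank_mono': "finite Y \<Longrightarrow> mono (rank_in Y)"
  by (simp add: monoI rank_mono)

lemma rank_strict: "finite Y \<Longrightarrow> y \<in> Y \<Longrightarrow> y' \<in> Y \<Longrightarrow> y < y' \<Longrightarrow> rank_in Y y < rank_in Y y'"
proof -
  assume a: "finite Y" "y \<in> Y" "y' \<in> Y" "y < y'"
  have "y' \<in> {z\<in>Y. z \<le> y'}" "y' \<notin> {z\<in>Y. z \<le> y}" "{z\<in>Y. z \<le> y} \<subseteq> {z\<in>Y. z \<le> y'}"
    using a by auto
  then have "{z\<in>Y. z \<le> y} \<subset> {z\<in>Y. z \<le> y'}" by blast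
  then show ?thesis unfolding rank_in_def by (rule psubset_card_mono[rotated]) (use a in auto)
qed

lemma rank_inj: "finite Y \<Longrightarrow> inj_on (rank_in Y) Y"
proof (rule inj_onI)
  fix x y assume a: "finite Y" "x \<in> Y" "y \<in> Y" "rank_in Y x = rank_in Y y"
  show "x = y"
  proof (rule ccontr)
    assume "x \<noteq> y" then have "x < y \<or> y < x" by arith
    then show False using rank_strict[OF a(1,2,3)] rank_strict[OF a(1,3,2)] a(4) by auto
  qed
qed

lemma rank_pos: "finite Y \<Longrightarrow> y \<in> Y \<Longrightarrow> 1 \<le> rank_in Y y"
proof -
  assume "finite Y" "y \<in> Y"
  then have "y \<in> {z\<in>Y. z \<le> y}" "finite {z\<in>Y. z \<le> y}" by auto
  then have "card {z\<in>Y. z \<le> y} > 0" using card_gt_0_iff by blast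
  then show ?thesis unfolding rank_in_def by simp
qed

lemma rank_le: "finite Y \<Longrightarrow> rank_in Y y \<le> card Y"
  unfolding rank_in_def by (rule card_mono) auto

lemma rank_image: "finite Y \<Longrightarrow> rank_in Y ` Y = {1..card Y}"
proof -
  assume f: "finite Y"
  have sub: "rank_in Y ` Y \<subseteq> {1..card Y}" using rank_pos[OF f] rank_le[OF f] by auto
  have "card (rank_in Y ` Y) = card {1..card Y}" using card_image[OF rank_inj[OF f]] by simp
  then show ?thesis using card_subset_eq[OF _ sub] by simp
qed

lemma rank_transfer:
  assumes "finite B" "b \<in> B" and sm: "\<forall>x\<in>B. \<forall>y\<in>B. x < y \<longrightarrow> g x < g y"
  shows "rank_in (g ` B) (g b) = rank_in B b"
proof -
  have inj: "inj_on g B"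
  proof (rule inj_onI)
    fix x y assume a: "x \<in> B" "y \<in> B" "g x = g y"
    show "x = y"
    proof (rule ccontr)
      assume "x \<noteq> y" then have "x < y \<or> y < x" by arith
      then show False using sm a by (metis less_irrefl)
    qed
  qed
  have iff: "g z \<le> g b \<longleftrightarrow> z \<le> b" if "z \<in> B" for z
  proof -
    have "z < b \<Longrightarrow> g z < g b" "b < z \<Longrightarrow> g b < g z" using sm that assms(2) by blast+
    then show ?thesis by (cases z b rule: linorder_cases) auto
  qed
  have "{z \<in> g ` B. z \<le> g b} = g ` {z \<in> B. z \<le> b}" using iff by auto
  then show ?thesis unfolding rank_in_def
    by (simp add: card_image inj_on_subset[OF inj])
qed

definition fmu :: "topo \<Rightarrow> nat \<Rightarrow> nat" where "fmu t i = Min (tclass t i)"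

lemma tclass_eq': "tclass (n,T) i = {j\<in>{1..n}. tequiv T i j}" by (simp add: tclass_def)

lemma tclass_self: "i \<in> {1..n} \<Longrightarrow> i \<in> tclass (n,T) i"
  by (simp add: tclass_eq' tequiv_refl)

lemma tclass_finite: "finite (tclass (n,T) i)"
  by (simp add: tclass_eq')

lemma fmu_in_class: "i \<in> {1..n} \<Longrightarrow> fmu (n,T) i \<in> tclass (n,T) i"
  unfolding fmu_def by (rule Min_in[OF tclass_finite]) (use tclass_self in blast)

lemma fmu_range: "i \<in> {1..n} \<Longrightarrow> fmu (n,T) i \<in> {1..n}"
  using fmu_in_class[of i n T] by (simp add: tclass_eq')

lemma fmu_equiv: "i \<in> {1..n} \<Longrightarrow> tequiv T i (fmu (n,T) i)"
  using fmu_in_class[of i n T] by (simp add: tclass_eq')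

lemma tclass_cong: "tequiv T i j \<Longrightarrow> tclass (n,T) i = tclass (n,T) j"
  unfolding tclass_eq' using tequiv_sym tequiv_trans by blast

lemma fmu_cong: "tequiv T i j \<Longrightarrow> fmu (n,T) i = fmu (n,T) j"
  unfolding fmu_def using tclass_cong[of T i j n] by simp

lemma fmu_eq_iff: "i \<in> {1..n} \<Longrightarrow> j \<in> {1..n} \<Longrightarrow> fmu (n,T) i = fmu (n,T) j \<longleftrightarrow> tequiv T i j"
proof
  assume a: "i \<in> {1..n}" "j \<in> {1..n}" "fmu (n,T) i = fmu (n,T) j"
  have "tequiv T i (fmu (n,T) i)" "tequiv T j (fmu (n,T) j)" using fmu_equiv a by blast+
  then show "tequiv T i j" using a(3) tequiv_sym tequiv_trans by metis
qed (rule fmu_cong)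

lemma fmu_le: "i \<in> {1..n} \<Longrightarrow> fmu (n,T) i \<le> i"
  unfolding fmu_def by (rule Min_le[OF tclass_finite tclass_self])

lemma class_mins_eq: "class_mins (n,T) = fmu (n,T) ` {1..n}"
  by (auto simp: class_mins_def fmu_def)

lemma nclasses_eq: "nclasses (n,T) = card (fmu (n,T) ` {1..n})"
  by (simp add: nclasses_def class_mins_eq)

lemma class_idx_eq: "class_idx (n,T) x = rank_in (fmu (n,T) ` {1..n}) (fmu (n,T) x)"
  by (simp add: class_idx_def rank_in_def class_mins_eq fmu_def)

lemma cidx_range: "class_idx (n,T) ` {1..n} = {1..nclasses (n,T)}"
proof -
  have "class_idx (n,T) ` {1..n} = rank_in (fmu (n,T) ` {1..n}) ` (fmu (n,T) ` {1..n})"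
    by (auto simp: class_idx_eq)
  also have "\<dots> = {1..nclasses (n,T)}" by (simp add: rank_image nclasses_eq)
  finally show ?thesis .
qed

lemma cidx_eq_iff:
  assumes "x \<in> {1..n}" "y \<in> {1..n}"
  shows "class_idx (n,T) x = class_idx (n,T) y \<longleftrightarrow> tequiv T x y"
proof -
  have "inj_on (rank_in (fmu (n,T) ` {1..n})) (fmu (n,T) ` {1..n})" by (rule rank_inj) simp
  then have "class_idx (n,T) x = class_idx (n,T) y \<longleftrightarrow> fmu (n,T) x = fmu (n,T) y"
    unfolding class_idx_eq using assms by (auto dest: inj_onD)
  then show ?thesis using fmu_eq_iff assms by simp
qed

lemma nclasses_le: "nclasses (n,T) \<le> n"
  unfolding nclasses_eq using card_image_le[of "{1..n}" "fmu (n,T)"] by simp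

definition sat :: "nat set set \<Rightarrow> nat set \<Rightarrow> bool" where
  "sat T Y \<longleftrightarrow> (\<forall>y\<in>Y. \<forall>z. tequiv T y z \<longrightarrow> z \<in> Y)"

lemma open_sat: "U \<in> T \<Longrightarrow> sat T U"
  by (auto simp: sat_def tequiv_def intro: open_up)

lemma compl_sat: assumes "is_top n T" "U \<in> T" shows "sat T ({1..n} - U)"
  unfolding sat_def
proof (intro ballI allI impI)
  fix y z assume y: "y \<in> {1..n} - U" and e: "tequiv T y z"
  have yz: "tle T y z" "tle T z y" using e by (simp_all add: tequiv_def)
  have y1: "y \<in> {1..n}" "y \<notin> U" using y by simp_all
  have "z \<in> {1..n}" using tle_in[OF assms(1) y1(1) yz(1)] .
  moreover have "z \<notin> U"
  proof
    assume "z \<in> U" then have "y \<in> U" using open_up[OF assms(2) _ yz(2)] by blast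
    then show False using y1 by simp
  qed
  ultimately show "z \<in> {1..n} - U" by simp
qed

lemma fmu_sat: assumes "Y \<subseteq> {1..n}" "sat T Y" shows "fmu (n,T) ` Y \<subseteq> Y"
proof
  fix z assume "z \<in> fmu (n,T) ` Y"
  then obtain y where y: "y \<in> Y" "z = fmu (n,T) y" by blast
  then have "tequiv T y z" using fmu_equiv[of y n T] assms(1) by blast
  then show "z \<in> Y" using assms(2) y(1) unfolding sat_def by blast
qed

lemma cidx_Int:
  assumes "A \<subseteq> {1..n}" "B \<subseteq> {1..n}" "sat T A"
  shows "class_idx (n,T) ` (A \<inter> B) = class_idx (n,T) ` A \<inter> class_idx (n,T) ` B"
proof
  show "class_idx (n,T) ` (A \<inter> B) \<subseteq> class_idx (n,T) ` A \<inter> class_idx (n,T) ` B" by blast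
  show "class_idx (n,T) ` A \<inter> class_idx (n,T) ` B \<subseteq> class_idx (n,T) ` (A \<inter> B)"
  proof
    fix c assume "c \<in> class_idx (n,T) ` A \<inter> class_idx (n,T) ` B"
    then obtain a b where ab: "a \<in> A" "b \<in> B" "c = class_idx (n,T) a" "c = class_idx (n,T) b" by blast
    have "a \<in> {1..n}" "b \<in> {1..n}" using assms(1,2) ab(1,2) by auto
    then have "tequiv T a b" using cidx_eq_iff[of a n b T] ab(3,4) by simp
    then have "b \<in> A" using assms(3) ab by (auto simp: sat_def)
    then show "c \<in> class_idx (n,T) ` (A \<inter> B)" using ab by blast
  qed
qed

lemma cidx_inj_sat:
  assumes "A \<subseteq> {1..n}" "B \<subseteq> {1..n}" "sat T A" "sat T B"
    "class_idx (n,T) ` A = class_idx (n,T) ` B"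
  shows "A = B"
proof -
  have *: "X \<subseteq> Y" if h: "X \<subseteq> {1..n}" "Y \<subseteq> {1..n}" "sat T Y" "class_idx (n,T) ` X = class_idx (n,T) ` Y" for X Y
  proof
    fix x assume x: "x \<in> X"
    then obtain y where y: "y \<in> Y" "class_idx (n,T) x = class_idx (n,T) y" using h(4) by blast
    have "x \<in> {1..n}" "y \<in> {1..n}" using h(1,2) x y(1) by auto
    then have "tequiv T y x" using cidx_eq_iff[of x n y T] y(2) tequiv_sym by blast
    then show "x \<in> Y" using h(3) y(1) unfolding sat_def by blast
  qed
  show ?thesis using *[of A B] *[of B A] assms by blast
qed

lemma cidx_diff:
  assumes "A \<subseteq> {1..n}" "sat T A"
  shows "class_idx (n,T) ` ({1..n} - A) = {1..nclasses (n,T)} - class_idx (n,T) ` A"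
proof -
  have "class_idx (n,T) ` ({1..n} - A) \<inter> class_idx (n,T) ` A = {}"
    using cidx_Int[OF assms(1) _ assms(2), of "{1..n} - A"] by auto
  moreover have "class_idx (n,T) ` ({1..n} - A) \<union> class_idx (n,T) ` A = {1..nclasses (n,T)}"
  proof -
    have "({1..n} - A) \<union> A = {1..n}" using assms(1) by blast
    then show ?thesis using cidx_range[of n T] by (metis image_Un)
  qed
  ultimately show ?thesis by blast
qed

lemma tle_image:
  assumes "\<forall>U\<in>T. U \<subseteq> A" "\<forall>U\<in>T. \<forall>x\<in>U. \<forall>y\<in>A. g x = g y \<longrightarrow> y \<in> U" "x \<in> A" "y \<in> A"
  shows "tle ((`) g ` T) (g x) (g y) \<longleftrightarrow> tle T x y"
proof
  assume h: "tle ((`) g ` T) (g x) (g y)"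
  show "tle T x y" unfolding tle_def
  proof (intro ballI impI)
    fix U assume U: "U \<in> T" "x \<in> U"
    then have "g y \<in> g ` U" using h by (auto simp: tle_def)
    then obtain y' where "y' \<in> U" "g y' = g y" by auto
    then show "y \<in> U" using assms(2) U assms(4) by blast
  qed
next
  assume h: "tle T x y"
  show "tle ((`) g ` T) (g x) (g y)" unfolding tle_def
  proof (intro ballI impI)
    fix V assume V: "V \<in> (`) g ` T" "g x \<in> V"
    then obtain U where U: "U \<in> T" "V = g ` U" by auto
    then obtain x' where "x' \<in> U" "g x' = g x" using V by auto
    then have "x \<in> U" using assms(2) U assms(3) by blast
    then show "g y \<in> V" using h U by (auto simp: tle_def)
  qed
qed

lemma cidx_sat_cond:
  assumes "is_top n T"
  shows "\<forall>U\<in>T. \<forall>x\<in>U. \<forall>y\<in>{1..n}. class_idx (n,T) x = class_idx (n,T) y \<longrightarrow> y \<in> U"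
proof (intro ballI impI)
  fix U x y assume "U \<in> T" "x \<in> U" "y \<in> {1..n}" "class_idx (n,T) x = class_idx (n,T) y"
  moreover have "x \<in> {1..n}" using open_sub[OF assms] calculation by blast
  ultimately show "y \<in> U" using cidx_eq_iff[of x n y T] open_sat[of U T] by (auto simp: sat_def)
qed

lemma bar_le_cidx:
  assumes "is_top n T" "x \<in> {1..n}" "y \<in> {1..n}"
  shows "bar_le (n,T) (class_idx (n,T) x) (class_idx (n,T) y) \<longleftrightarrow> tle T x y"
proof
  assume "bar_le (n,T) (class_idx (n,T) x) (class_idx (n,T) y)"
  then show "tle T x y" using assms by (auto simp: bar_le_def)
next
  assume h: "tle T x y"
  show "bar_le (n,T) (class_idx (n,T) x) (class_idx (n,T) y)" unfolding bar_le_def fst_conv snd_conv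
  proof (intro ballI impI)
    fix x' y' assume a: "x' \<in> {1..n}" "y' \<in> {1..n}" "class_idx (n,T) x' = class_idx (n,T) x"
      "class_idx (n,T) y' = class_idx (n,T) y"
    then have "tequiv T x' x" "tequiv T y y'" using cidx_eq_iff assms tequiv_sym by blast+
    then show "tle T x' y'" using h by (auto simp: tequiv_def intro: tle_trans)
  qed
qed

lemma bar_top_eq:
  assumes T: "is_top n T"
  shows "bar_top (n,T) = (nclasses (n,T), (`) (class_idx (n,T)) ` T)"
proof -
  let ?f = "class_idx (n,T)" and ?k = "nclasses (n,T)"
  have "{I. I \<subseteq> {1..?k} \<and> (\<forall>a\<in>I. \<forall>b\<in>{1..?k}. bar_le (n,T) a b \<longrightarrow> b \<in> I)} = (`) ?f ` T"
  proof (intro equalityI subsetI)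
    fix I assume "I \<in> {I. I \<subseteq> {1..?k} \<and> (\<forall>a\<in>I. \<forall>b\<in>{1..?k}. bar_le (n,T) a b \<longrightarrow> b \<in> I)}"
    then have I: "I \<subseteq> {1..?k}" "\<forall>a\<in>I. \<forall>b\<in>{1..?k}. bar_le (n,T) a b \<longrightarrow> b \<in> I" by auto
    define U where "U = {x\<in>{1..n}. ?f x \<in> I}"
    have "?f ` U = I"
    proof
      show "?f ` U \<subseteq> I" by (auto simp: U_def)
      show "I \<subseteq> ?f ` U"
      proof
        fix a assume "a \<in> I"
        then have "a \<in> ?f ` {1..n}" using I(1) cidx_range[of n T] by auto
        then show "a \<in> ?f ` U" using \<open>a \<in> I\<close> by (auto simp: U_def)
      qed
    qed
    moreover have "U \<in> T"
    proof (rule alexandrov[OF T])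
      show "U \<subseteq> {1..n}" by (auto simp: U_def)
      show "\<forall>i\<in>U. \<forall>j. tle T i j \<longrightarrow> j \<in> U"
      proof (intro ballI allI impI)
        fix i j assume i: "i \<in> U" and ij: "tle T i j"
        then have ii: "i \<in> {1..n}" "?f i \<in> I" by (auto simp: U_def)
        have j: "j \<in> {1..n}" using tle_in[OF T ii(1) ij] .
        have "bar_le (n,T) (?f i) (?f j)" using bar_le_cidx[OF T ii(1) j] ij by simp
        moreover have "?f j \<in> {1..?k}" using cidx_range[of n T] j by blast
        ultimately have "?f j \<in> I" using I(2) ii(2) by blast
        then show "j \<in> U" using j by (simp add: U_def)
      qed
    qed
    ultimately show "I \<in> (`) ?f ` T" by blast
  next
    fix I assume "I \<in> (`) ?f ` T"
    then obtain U where U: "U \<in> T" "I = ?f ` U" by blast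
    have Un: "U \<subseteq> {1..n}" using open_sub[OF T U(1)] .
    have "I \<subseteq> {1..?k}" using U Un cidx_range[of n T] by blast
    moreover have "\<forall>a\<in>I. \<forall>b\<in>{1..?k}. bar_le (n,T) a b \<longrightarrow> b \<in> I"
    proof (intro ballI impI)
      fix a b assume a: "a \<in> I" and b: "b \<in> {1..?k}" and ab: "bar_le (n,T) a b"
      obtain x where x: "x \<in> U" "a = ?f x" using a U by blast
      have "b \<in> ?f ` {1..n}" using b cidx_range[of n T] by simp
      then obtain y where y: "y \<in> {1..n}" "b = ?f y" by blast
      have "tle T x y" using bar_le_cidx[OF T _ y(1)] x Un ab y by auto
      then have "y \<in> U" using open_up[OF U(1) x(1)] by blast
      then show "b \<in> I" using U y by blast
    qed
    ultimately show "I \<in> {I. I \<subseteq> {1..?k} \<and> (\<forall>a\<in>I. \<forall>b\<in>{1..?k}. bar_le (n,T) a b \<longrightarrow> b \<in> I)}" by blast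
  qed
  then show ?thesis by (simp add: bar_top_def)
qed

lemma bar_is_top:
  assumes T: "is_top n T"
  shows "is_top (nclasses (n,T)) ((`) (class_idx (n,T)) ` T)"
proof -
  let ?f = "class_idx (n,T)" and ?k = "nclasses (n,T)"
  have R: "?f ` {1..n} = {1..?k}" by (rule cidx_range)
  have "(`) ?f ` T \<subseteq> Pow {1..?k}"
  proof
    fix V assume "V \<in> (`) ?f ` T"
    then obtain U where "U \<in> T" "V = ?f ` U" by blast
    then have "V \<subseteq> ?f ` {1..n}" using open_sub[OF T] by blast
    then show "V \<in> Pow {1..?k}" using R by simp
  qed
  moreover have "{} \<in> (`) ?f ` T" by (rule image_eqI[OF _ is_topD(2)[OF T]]) simp
  moreover have "{1..?k} \<in> (`) ?f ` T" by (rule rev_image_eqI[OF is_topD(3)[OF T]], rule R[symmetric])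
  moreover have "\<forall>A\<in>(`) ?f ` T. \<forall>B\<in>(`) ?f ` T. A \<union> B \<in> (`) ?f ` T \<and> A \<inter> B \<in> (`) ?f ` T"
  proof (intro ballI conjI)
    fix A B assume "A \<in> (`) ?f ` T" "B \<in> (`) ?f ` T"
    then obtain U V where UV: "U \<in> T" "V \<in> T" "A = ?f ` U" "B = ?f ` V" by blast
    have "A \<union> B = ?f ` (U \<union> V)" using UV by (simp add: image_Un)
    moreover have "U \<union> V \<in> T" using is_topD(4)[OF T UV(1,2)] .
    ultimately show "A \<union> B \<in> (`) ?f ` T" by blast
    have "A \<inter> B = ?f ` (U \<inter> V)"
      using cidx_Int[OF open_sub[OF T UV(1)] open_sub[OF T UV(2)] open_sat[OF UV(1)]] UV by simp
    moreover have "U \<inter> V \<in> T" using is_topD(5)[OF T UV(1,2)] .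
    ultimately show "A \<inter> B \<in> (`) ?f ` T" by blast
  qed
  ultimately show ?thesis unfolding is_top_def by (intro conjI) simp_all
qed

lemma tle_bar:
  assumes T: "is_top n T" and xy: "x \<in> {1..n}" "y \<in> {1..n}"
  shows "tle ((`) (class_idx (n,T)) ` T) (class_idx (n,T) x) (class_idx (n,T) y) \<longleftrightarrow> tle T x y"
  by (rule tle_image[OF _ cidx_sat_cond[OF T] xy]) (use open_sub[OF T] in blast)

lemma bar_T0:
  assumes T: "is_top n T"
  shows "is_T0 (bar_top (n,T))"
  unfolding is_T0_def bar_top_eq[OF T] fst_conv snd_conv
proof (intro ballI impI)
  fix i j assume i: "i \<in> {1..nclasses (n,T)}" and j: "j \<in> {1..nclasses (n,T)}"
    and e: "tequiv ((`) (class_idx (n,T)) ` T) i j"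
  have "i \<in> class_idx (n,T) ` {1..n}" "j \<in> class_idx (n,T) ` {1..n}" using i j cidx_range[of n T] by simp_all
  then obtain x y where xy: "x \<in> {1..n}" "y \<in> {1..n}" "i = class_idx (n,T) x" "j = class_idx (n,T) y" by blast
  have "tequiv T x y" using e tle_bar[OF T xy(1,2)] tle_bar[OF T xy(2,1)] xy(3,4) by (simp add: tequiv_def)
  then show "i = j" using cidx_eq_iff[OF xy(1,2)] xy(3,4) by simp
qed

lemma bar_T0_id:
  assumes T: "is_top n T" and T0: "is_T0 (n,T)"
  shows "bar_top (n,T) = (n,T)" "cdef (n,T) = 0"
proof -
  have fmu_id: "fmu (n,T) x = x" if x: "x \<in> {1..n}" for x
  proof -
    have "tclass (n,T) x = {x}"
    proof
      show "tclass (n,T) x \<subseteq> {x}"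
      proof
        fix j assume "j \<in> tclass (n,T) x"
        then have j: "j \<in> {1..n}" "tequiv T x j" unfolding tclass_eq' by simp_all
        then have "x = j" using T0 x unfolding is_T0_def fst_conv snd_conv by blast
        then show "j \<in> {x}" by simp
      qed
      show "{x} \<subseteq> tclass (n,T) x" using tclass_self[OF x] by simp
    qed
    then show ?thesis by (simp add: fmu_def)
  qed
  have M: "fmu (n,T) ` {1..n} = {1..n}"
  proof -
    have "fmu (n,T) ` {1..n} = (\<lambda>x. x) ` {1..n}" by (rule image_cong) (simp_all add: fmu_id)
    then show ?thesis by simp
  qed
  have k: "nclasses (n,T) = n" unfolding nclasses_eq M by simp
  have f: "class_idx (n,T) x = x" if x: "x \<in> {1..n}" for x
  proof -
    have "{z \<in> {1..n}. z \<le> x} = {1..x}" using x by auto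
    then show ?thesis unfolding class_idx_eq M fmu_id[OF x] rank_in_def by simp
  qed
  have "(`) (class_idx (n,T)) ` T = T"
  proof -
    have "class_idx (n,T) ` U = U" if "U \<in> T" for U
    proof -
      have "class_idx (n,T) ` U = (\<lambda>x. x) ` U"
      proof (rule image_cong[OF refl])
        fix x assume "x \<in> U" then show "class_idx (n,T) x = x" using open_sub[OF T that] f by blast
      qed
      then show ?thesis by simp
    qed
    then have "(`) (class_idx (n,T)) ` T = (\<lambda>U. U) ` T" by (rule image_cong[OF refl])
    then show ?thesis by simp
  qed
  then show "bar_top (n,T) = (n,T)" by (simp add: bar_top_eq[OF T] k)
  show "cdef (n,T) = 0" by (simp add: cdef_def k)
qed

lemma mem_shift: "0 \<notin> (U::nat set) \<Longrightarrow> j \<in> (\<lambda>k. k + n) ` U \<longleftrightarrow> (n < j \<and> j - n \<in> U)"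
proof
  assume "0 \<notin> U" "j \<in> (\<lambda>k. k + n) ` U"
  then obtain k where "k \<in> U" "j = k + n" by blast
  moreover then have "k \<noteq> 0" using \<open>0 \<notin> U\<close> by metis
  ultimately show "n < j \<and> j - n \<in> U" by simp
next
  assume "n < j \<and> j - n \<in> U"
  then have "j = (j - n) + n" "j - n \<in> U" by simp_all
  then show "j \<in> (\<lambda>k. k + n) ` U" by (rule image_eqI)
qed

lemma Min_shift: "finite (A::nat set) \<Longrightarrow> A \<noteq> {} \<Longrightarrow> Min ((\<lambda>k. k + n) ` A) = Min A + n"
  by (rule mono_Min_commute[symmetric]) (auto simp: mono_def)

lemma interval_split: "{1..(n::nat)+n'} = {1..n} \<union> (\<lambda>k. k + n) ` {1..n'}"
proof
  show "{1..n+n'} \<subseteq> {1..n} \<union> (\<lambda>k. k + n) ` {1..n'}"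
  proof
    fix j assume j: "j \<in> {1..n+n'}"
    show "j \<in> {1..n} \<union> (\<lambda>k. k + n) ` {1..n'}"
    proof (cases "j \<le> n")
      case False
      then have "j - n \<in> {1..n'}" "j = (j - n) + n" using j by auto
      then show ?thesis by blast
    qed (use j in simp)
  qed
  show "{1..n} \<union> (\<lambda>k. k + n) ` {1..n'} \<subseteq> {1..n+n'}" by auto
qed

lemma split_cidx:
  assumes T: "is_top n T" and T': "is_top n' T'"
    and eq: "\<And>i j. i \<in> {1..n+n'} \<Longrightarrow> j \<in> {1..n+n'} \<Longrightarrow> tequiv C i j \<longleftrightarrow>
      (i \<le> n \<and> j \<le> n \<and> tequiv T i j) \<or> (n < i \<and> n < j \<and> tequiv T' (i-n) (j-n))"
  shows "nclasses (n+n',C) = nclasses (n,T) + nclasses (n',T')"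
    "\<And>i. i \<in> {1..n+n'} \<Longrightarrow> class_idx (n+n',C) i =
       (if i \<le> n then class_idx (n,T) i else class_idx (n',T') (i-n) + nclasses (n,T))"
proof -
  let ?sh = "\<lambda>k::nat. k + n"
  have tc1: "tclass (n+n',C) i = tclass (n,T) i" if i: "i \<in> {1..n}" for i
  proof -
    have "{j\<in>{1..n+n'}. tequiv C i j} = {j\<in>{1..n}. tequiv T i j}"
    proof (intro equalityI subsetI)
      fix j assume "j \<in> {j\<in>{1..n+n'}. tequiv C i j}"
      then show "j \<in> {j\<in>{1..n}. tequiv T i j}" using eq[of i j] i by auto
    next
      fix j assume "j \<in> {j\<in>{1..n}. tequiv T i j}"
      then show "j \<in> {j\<in>{1..n+n'}. tequiv C i j}" using eq[of i j] i by auto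
    qed
    then show ?thesis by (simp add: tclass_eq')
  qed
  have tc2: "tclass (n+n',C) i = ?sh ` tclass (n',T') (i-n)" if i: "i \<in> {1..n+n'}" "n < i" for i
  proof -
    have "{j\<in>{1..n+n'}. tequiv C i j} = ?sh ` {j\<in>{1..n'}. tequiv T' (i-n) j}"
    proof (intro equalityI subsetI)
      fix j assume "j \<in> {j\<in>{1..n+n'}. tequiv C i j}"
      then have j: "j \<in> {1..n+n'}" "tequiv C i j" by auto
      then have "n < j" "tequiv T' (i-n) (j-n)" using eq[of i j] i by auto
      then have "j - n \<in> {j\<in>{1..n'}. tequiv T' (i-n) j}" "j = ?sh (j - n)" using j(1) by auto
      then show "j \<in> ?sh ` {j\<in>{1..n'}. tequiv T' (i-n) j}" by (rule rev_image_eqI)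
    next
      fix j assume "j \<in> ?sh ` {j\<in>{1..n'}. tequiv T' (i-n) j}"
      then obtain j' where j': "j' \<in> {1..n'}" "tequiv T' (i-n) j'" "j = j' + n" by auto
      then have "j \<in> {1..n+n'}" "n < j" "j - n = j'" by auto
      then show "j \<in> {j\<in>{1..n+n'}. tequiv C i j}" using eq[of i j] i j' by auto
    qed
    then show ?thesis by (simp add: tclass_eq')
  qed
  have fm1: "fmu (n+n',C) i = fmu (n,T) i" if "i \<in> {1..n}" for i
    using tc1[OF that] by (simp add: fmu_def)
  have fm2: "fmu (n+n',C) i = fmu (n',T') (i-n) + n" if i: "i \<in> {1..n+n'}" "n < i" for i
  proof -
    have "i - n \<in> {1..n'}" using i by auto
    then have "tclass (n',T') (i-n) \<noteq> {}" using tclass_self by blast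
    then show ?thesis using tc2[OF i] Min_shift[OF tclass_finite] by (simp add: fmu_def)
  qed
  define M where "M = fmu (n,T) ` {1..n}"
  define M' where "M' = fmu (n',T') ` {1..n'}"
  have MC: "fmu (n+n',C) ` {1..n+n'} = M \<union> ?sh ` M'"
  proof -
    have "fmu (n+n',C) ` {1..n+n'} = fmu (n+n',C) ` {1..n} \<union> fmu (n+n',C) ` (?sh ` {1..n'})"
      unfolding interval_split[of n n'] image_Un by (rule refl)
    also have "fmu (n+n',C) ` {1..n} = M" unfolding M_def by (rule image_cong) (simp_all add: fm1)
    also have "fmu (n+n',C) ` (?sh ` {1..n'}) = ?sh ` M'"
      unfolding M'_def image_image
    proof (rule image_cong[OF refl])
      fix k assume "k \<in> {1..n'}"
      then show "fmu (n+n',C) (k + n) = fmu (n',T') k + n" using fm2[of "k+n"] by simp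
    qed
    finally show ?thesis .
  qed
  have Msub: "M \<subseteq> {1..n}" unfolding M_def using fmu_range by blast
  have M'sub: "M' \<subseteq> {1..n'}" unfolding M'_def using fmu_range by blast
  have fin: "finite M" "finite M'" using Msub M'sub finite_subset by blast+
  have disj: "M \<inter> ?sh ` M' = {}"
  proof -
    have "x \<le> n" if "x \<in> M" for x using that Msub by auto
    moreover have "n < x" if "x \<in> ?sh ` M'" for x using that M'sub by auto
    ultimately show ?thesis by fastforce
  qed
  have injsh: "inj_on ?sh A" for A :: "nat set" by (simp add: inj_on_def)
  have cardMC: "card (M \<union> ?sh ` M') = card M + card M'"
    using card_Un_disjoint[OF fin(1) _ disj] fin(2) card_image[OF injsh] by simp
  have rk1: "rank_in (M \<union> ?sh ` M') m = rank_in M m" if m: "m \<in> M" for m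
  proof -
    have "m \<le> n" using m Msub by auto
    then have "\<not> x \<le> m" if "x \<in> ?sh ` M'" for x using that M'sub by auto
    then have "{z \<in> M \<union> ?sh ` M'. z \<le> m} = {z\<in>M. z \<le> m}" by blast
    then show ?thesis by (simp add: rank_in_def)
  qed
  have rk2: "rank_in (M \<union> ?sh ` M') (m + n) = card M + rank_in M' m" if m: "m \<in> M'" for m
  proof -
    have "{z \<in> M \<union> ?sh ` M'. z \<le> m + n} = M \<union> ?sh ` {z\<in>M'. z \<le> m}"
      using Msub by auto
    moreover have "M \<inter> ?sh ` {z\<in>M'. z \<le> m} = {}" using disj by auto
    moreover have "finite {z\<in>M'. z \<le> m}" using fin(2) by simp
    ultimately show ?thesis unfolding rank_in_def
      using card_Un_disjoint[OF fin(1)] card_image[OF injsh] by simp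
  qed
  show "nclasses (n+n',C) = nclasses (n,T) + nclasses (n',T')"
    unfolding nclasses_eq MC using cardMC by (simp add: M_def M'_def)
  show "class_idx (n+n',C) i =
       (if i \<le> n then class_idx (n,T) i else class_idx (n',T') (i-n) + nclasses (n,T))"
    if i: "i \<in> {1..n+n'}" for i
  proof (cases "i \<le> n")
    case True
    then have i1: "i \<in> {1..n}" using i by simp
    have "fmu (n,T) i \<in> M" using i1 by (simp add: M_def)
    note r = rk1[OF this]
    show ?thesis using True r
      unfolding class_idx_eq MC fm1[OF i1] by (simp add: M_def)
  next
    case False
    then have i1: "i - n \<in> {1..n'}" using i by auto
    have "fmu (n',T') (i-n) \<in> M'" using i1 by (simp add: M'_def)
    note r = rk2[OF this]
    have ni: "n < i" using False by simp
    show ?thesis using False r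
      unfolding class_idx_eq MC fm2[OF i ni]
      by (simp add: nclasses_eq M_def M'_def)
  qed
qed


lemma conc_top_eq: "conc_top (n,T) (n',T') = (n+n', (\<lambda>(U,U'). U \<union> (\<lambda>k. k+n) ` U') ` (T \<times> T'))"
  by (auto simp: conc_top_def)

lemma down_top_eq: "down_top (n,T) (n',T') = (n+n', (\<lambda>U. U \<union> (\<lambda>k. k+n) ` {1..n'}) ` T \<union> (\<lambda>U'. (\<lambda>k. k+n) ` U') ` T')"
  by (auto simp: down_top_def)

lemma prod_img: "a \<in> A \<Longrightarrow> b \<in> B \<Longrightarrow> g a b \<in> (\<lambda>(x,y). g x y) ` (A \<times> B)"
  by force

lemma memC:
  assumes "U \<subseteq> {1..(n::nat)}" "U' \<subseteq> {1..(n'::nat)}"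
  shows "x \<in> U \<union> (\<lambda>k. k+n) ` U' \<longleftrightarrow> (x \<le> n \<and> x \<in> U) \<or> (n < x \<and> x - n \<in> U')"
proof -
  have "0 \<notin> U'" using assms(2) by auto
  then have "x \<in> (\<lambda>k. k+n) ` U' \<longleftrightarrow> (n < x \<and> x - n \<in> U')" by (rule mem_shift)
  moreover have "x \<in> U \<Longrightarrow> x \<le> n" using assms(1) by auto
  ultimately show ?thesis by auto
qed

lemma memS:
  assumes "U' \<subseteq> {1..(n'::nat)}"
  shows "x \<in> (\<lambda>k. k+(n::nat)) ` U' \<longleftrightarrow> (n < x \<and> x - n \<in> U')"
  using memC[OF empty_subsetI assms, of x] by simp

lemma conc_is_top:
  assumes T: "is_top n T" and T': "is_top n' T'"
  shows "is_top (n+n') ((\<lambda>(U,U'). U \<union> (\<lambda>k. k+n) ` U') ` (T \<times> T'))"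
proof -
  let ?sh = "\<lambda>k::nat. k+n"
  let ?C = "(\<lambda>(U,U'). U \<union> ?sh ` U') ` (T \<times> T')"
  have sub: "?C \<subseteq> Pow {1..n+n'}"
  proof
    fix V assume "V \<in> ?C"
    then obtain U U' where U: "U \<in> T" "U' \<in> T'" "V = U \<union> ?sh ` U'" by auto
    have "U \<union> ?sh ` U' \<subseteq> {1..n} \<union> ?sh ` {1..n'}" using open_sub[OF T U(1)] open_sub[OF T' U(2)] by blast
    then show "V \<in> Pow {1..n+n'}" using U(3) interval_split[of n n'] by simp
  qed
  have e: "{} \<in> ?C"
  proof -
    have "{} = (\<lambda>(U,U'). U \<union> ?sh ` U') ({},{})" by simp
    moreover have "({},{}) \<in> T \<times> T'" using is_topD(2)[OF T] is_topD(2)[OF T'] by simp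
    ultimately show ?thesis by (rule image_eqI)
  qed
  have f: "{1..n+n'} \<in> ?C"
  proof -
    have "{1..n+n'} = (\<lambda>(U,U'). U \<union> ?sh ` U') ({1..n},{1..n'})" using interval_split[of n n'] by simp
    moreover have "({1..n},{1..n'}) \<in> T \<times> T'" using is_topD(3)[OF T] is_topD(3)[OF T'] by simp
    ultimately show ?thesis by (rule image_eqI)
  qed
  have ui: "A \<union> B \<in> ?C \<and> A \<inter> B \<in> ?C" if h: "A \<in> ?C" "B \<in> ?C" for A B
  proof -
    obtain U1 U1' where 1: "U1 \<in> T" "U1' \<in> T'" "A = U1 \<union> ?sh ` U1'" using h(1) by auto
    obtain U2 U2' where 2: "U2 \<in> T" "U2' \<in> T'" "B = U2 \<union> ?sh ` U2'" using h(2) by auto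
    have s: "U1 \<subseteq> {1..n}" "U2 \<subseteq> {1..n}" "U1' \<subseteq> {1..n'}" "U2' \<subseteq> {1..n'}"
      using open_sub[OF T 1(1)] open_sub[OF T 2(1)] open_sub[OF T' 1(2)] open_sub[OF T' 2(2)] by auto
    have s2: "U1 \<union> U2 \<subseteq> {1..n}" "U1 \<inter> U2 \<subseteq> {1..n}" "U1' \<union> U2' \<subseteq> {1..n'}" "U1' \<inter> U2' \<subseteq> {1..n'}"
      using s by auto
    have "A \<union> B = (U1 \<union> U2) \<union> ?sh ` (U1' \<union> U2')"
      by (rule set_eqI) (simp add: 1(3) 2(3) memC[OF s(1) s(3)] memC[OF s(2) s(4)] memC[OF s2(1) s2(3)], blast)
    moreover have "(U1 \<union> U2, U1' \<union> U2') \<in> T \<times> T'" using is_topD(4)[OF T 1(1) 2(1)] is_topD(4)[OF T' 1(2) 2(2)] by simp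
    ultimately have "A \<union> B \<in> ?C" using prod_img[of "U1 \<union> U2" T "U1' \<union> U2'" T' "\<lambda>U U'. U \<union> ?sh ` U'"] by simp
    have "A \<inter> B = (U1 \<inter> U2) \<union> ?sh ` (U1' \<inter> U2')"
      by (rule set_eqI) (unfold 1(3) 2(3) Int_iff memC[OF s(1) s(3)] memC[OF s(2) s(4)] memC[OF s2(2) s2(4)], auto)
    moreover have "(U1 \<inter> U2, U1' \<inter> U2') \<in> T \<times> T'" using is_topD(5)[OF T 1(1) 2(1)] is_topD(5)[OF T' 1(2) 2(2)] by simp
    ultimately have "A \<inter> B \<in> ?C" using prod_img[of "U1 \<inter> U2" T "U1' \<inter> U2'" T' "\<lambda>U U'. U \<union> ?sh ` U'"] by simp
    with \<open>A \<union> B \<in> ?C\<close> show ?thesis by simp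
  qed
  show ?thesis unfolding is_top_def
  proof (intro conjI ballI)
    fix A B assume a: "A \<in> ?C" "B \<in> ?C"
    show "A \<union> B \<in> ?C" by (rule conjunct1[OF ui[OF a]])
    show "A \<inter> B \<in> ?C" by (rule conjunct2[OF ui[OF a]])
  qed (rule sub, rule e, rule f)
qed


lemma conc_tle1:
  assumes T: "is_top n T" and T': "is_top n' T'" and ij: "i \<in> {1..n+n'}" "j \<in> {1..n+n'}"
    and R: "(i \<le> n \<and> j \<le> n \<and> tle T i j) \<or> (n < i \<and> n < j \<and> tle T' (i-n) (j-n))"
  shows "tle ((\<lambda>(U,U'). U \<union> (\<lambda>k. k+n) ` U') ` (T \<times> T')) i j"
  unfolding tle_def
proof (intro ballI impI)
  let ?sh = "\<lambda>k::nat. k+n"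
  fix V assume V: "V \<in> (\<lambda>(U,U'). U \<union> (\<lambda>k. k+n) ` U') ` (T \<times> T')" "i \<in> V"
  then obtain U U' where U: "U \<in> T" "U' \<in> T'" "V = U \<union> ?sh ` U'" by auto
  have mem: "x \<in> V \<longleftrightarrow> (x \<le> n \<and> x \<in> U) \<or> (n < x \<and> x - n \<in> U')" for x
    unfolding U(3) by (rule memC[OF open_sub[OF T U(1)] open_sub[OF T' U(2)]])
  show "j \<in> V"
  proof (cases "i \<le> n")
    case True
    then have a: "j \<le> n" "tle T i j" using R by auto
    have "i \<in> U" using True mem V(2) by auto
    then have "j \<in> U" using open_up[OF U(1)] a(2) by blast
    then show ?thesis using mem a(1) by blast
  next
    case False
    then have a: "n < j" "tle T' (i-n) (j-n)" using R by auto
    have "i - n \<in> U'" using False mem V(2) by auto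
    then have "j - n \<in> U'" using open_up[OF U(2)] a(2) by blast
    then show ?thesis using mem a(1) by blast
  qed
qed

lemma conc_tle2:
  assumes T: "is_top n T" and T': "is_top n' T'" and ij: "i \<in> {1..n+n'}" "j \<in> {1..n+n'}"
    and L: "tle ((\<lambda>(U,U'). U \<union> (\<lambda>k. k+n) ` U') ` (T \<times> T')) i j"
  shows "(i \<le> n \<and> j \<le> n \<and> tle T i j) \<or> (n < i \<and> n < j \<and> tle T' (i-n) (j-n))"
proof -
  let ?sh = "\<lambda>k::nat. k+n"
  have e: "{} \<in> T" "{} \<in> T'" "{1..n} \<in> T" "{1..n'} \<in> T'"
    using is_topD(2,3)[OF T] is_topD(2,3)[OF T'] by auto
  have L': "j \<in> U \<union> ?sh ` U'" if "U \<in> T" "U' \<in> T'" "i \<in> U \<union> ?sh ` U'" for U U'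
  proof -
    have m: "U \<union> ?sh ` U' \<in> (\<lambda>(U,U'). U \<union> (\<lambda>k. k+n) ` U') ` (T \<times> T')"
      using prod_img[OF that(1,2), of "\<lambda>U U'. U \<union> ?sh ` U'"] by simp
    have a: "\<forall>V\<in>(\<lambda>(U,U'). U \<union> (\<lambda>k. k+n) ` U') ` (T \<times> T'). i \<in> V \<longrightarrow> j \<in> V"
      using L unfolding tle_def .
    have "i \<in> U \<union> ?sh ` U' \<longrightarrow> j \<in> U \<union> ?sh ` U'" using bspec[OF a m] .
    then show ?thesis using that(3) by (rule mp)
  qed
  show ?thesis
  proof (cases "i \<le> n")
    case a1: True
    show ?thesis
    proof (cases "j \<le> n")
      case True
      have "tle T i j" unfolding tle_def
      proof (intro ballI impI)
        fix U assume "U \<in> T" "i \<in> U"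
        then show "j \<in> U" using L'[of U "{}"] e by simp
      qed
      then show ?thesis using a1 True by simp
    next
      case False
      have "i \<in> {1..n} \<union> ?sh ` {}" using a1 ij by simp
      then have "j \<in> {1..n} \<union> ?sh ` {}" using L'[of "{1..n}" "{}"] e by simp
      then show ?thesis using False by simp
    qed
  next
    case a1: False
    show ?thesis
    proof (cases "j \<le> n")
      case False
      have "tle T' (i-n) (j-n)" unfolding tle_def
      proof (intro ballI impI)
        fix U' assume U': "U' \<in> T'" "i - n \<in> U'"
        have m: "x \<in> ?sh ` U' \<longleftrightarrow> (n < x \<and> x - n \<in> U')" for x
          by (rule memS[OF open_sub[OF T' U'(1)]])
        have "i \<in> {} \<union> ?sh ` U'" using m[of i] a1 U'(2) by simp
        then have "j \<in> {} \<union> ?sh ` U'" using L'[of "{}" U'] e U'(1) by simp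
        then show "j - n \<in> U'" using m[of j] by simp
      qed
      then show ?thesis using a1 False by simp
    next
      case True
      have m: "x \<in> ?sh ` {1..n'} \<longleftrightarrow> (n < x \<and> x - n \<in> {1..n'})" for x
        by (rule memS[OF order_refl])
      have "i \<in> {} \<union> ?sh ` {1..n'}" using a1 ij m[of i] by simp
      then have "j \<in> {} \<union> ?sh ` {1..n'}" using L'[of "{}" "{1..n'}"] e by simp
      then show ?thesis using True m[of j] by simp
    qed
  qed
qed

lemma down_mem:
  assumes "V \<in> (\<lambda>U. U \<union> (\<lambda>k. k+n) ` {1..n'}) ` T \<union> (\<lambda>U'. (\<lambda>k. k+n) ` U') ` T'"
  obtains (A) U where "U \<in> T" "V = U \<union> (\<lambda>k. k+n) ` {1..n'}" | (B) U' where "U' \<in> T'" "V = (\<lambda>k. k+n) ` U'"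
  using assms by blast

lemma down_is_top:
  assumes T: "is_top n T" and T': "is_top n' T'"
  shows "is_top (n+n') ((\<lambda>U. U \<union> (\<lambda>k. k+n) ` {1..n'}) ` T \<union> (\<lambda>U'. (\<lambda>k. k+n) ` U') ` T')"
proof -
  let ?sh = "\<lambda>k::nat. k+n"
  let ?D = "(\<lambda>U. U \<union> ?sh ` {1..n'}) ` T \<union> (\<lambda>U'. ?sh ` U') ` T'"
  have inA: "U \<union> ?sh ` {1..n'} \<in> ?D" if "U \<in> T" for U using that by blast
  have inB: "?sh ` U' \<in> ?D" if "U' \<in> T'" for U' using that by blast
  have sub: "?D \<subseteq> Pow {1..n+n'}"
  proof
    fix V assume "V \<in> ?D"
    then show "V \<in> Pow {1..n+n'}"
    proof (cases rule: down_mem)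
      case (A U)
      then show ?thesis using open_sub[OF T A(1)] interval_split[of n n'] by auto
    next
      case (B U')
      then have "V \<subseteq> ?sh ` {1..n'}" using open_sub[OF T' B(1)] by auto
      then show ?thesis using interval_split[of n n'] by auto
    qed
  qed
  have e: "{} \<in> ?D" using inB[OF is_topD(2)[OF T']] by simp
  have f: "{1..n+n'} \<in> ?D" using inA[OF is_topD(3)[OF T]] interval_split[of n n'] by simp
  have AA: "(U1 \<union> ?sh ` {1..n'}) \<union> (U2 \<union> ?sh ` {1..n'}) \<in> ?D \<and> (U1 \<union> ?sh ` {1..n'}) \<inter> (U2 \<union> ?sh ` {1..n'}) \<in> ?D"
    if "U1 \<in> T" "U2 \<in> T" for U1 U2
  proof -
    have "(U1 \<union> ?sh ` {1..n'}) \<union> (U2 \<union> ?sh ` {1..n'}) = (U1 \<union> U2) \<union> ?sh ` {1..n'}" by blast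
    moreover have "(U1 \<union> ?sh ` {1..n'}) \<inter> (U2 \<union> ?sh ` {1..n'}) = (U1 \<inter> U2) \<union> ?sh ` {1..n'}" by blast
    ultimately show ?thesis using inA[OF is_topD(4)[OF T that]] inA[OF is_topD(5)[OF T that]] by simp
  qed
  have AB: "(U \<union> ?sh ` {1..n'}) \<union> ?sh ` U' \<in> ?D \<and> (U \<union> ?sh ` {1..n'}) \<inter> ?sh ` U' \<in> ?D"
    if "U \<in> T" "U' \<in> T'" for U U'
  proof -
    have s: "U \<subseteq> {1..n}" "U' \<subseteq> {1..n'}" using open_sub[OF T that(1)] open_sub[OF T' that(2)] by auto
    have "?sh ` U' \<subseteq> ?sh ` {1..n'}" using s(2) by (rule image_mono)
    then have "(U \<union> ?sh ` {1..n'}) \<union> ?sh ` U' = U \<union> ?sh ` {1..n'}" by blast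
    moreover have "(U \<union> ?sh ` {1..n'}) \<inter> ?sh ` U' = ?sh ` U'"
    proof (rule set_eqI)
      fix x
      show "x \<in> (U \<union> ?sh ` {1..n'}) \<inter> ?sh ` U' \<longleftrightarrow> x \<in> ?sh ` U'"
        unfolding Int_iff memC[OF s(1) order_refl] memS[OF s(2)] using s(2) by auto
    qed
    ultimately show ?thesis using inA[OF that(1)] inB[OF that(2)] by simp
  qed
  have BB: "?sh ` U1' \<union> ?sh ` U2' \<in> ?D \<and> ?sh ` U1' \<inter> ?sh ` U2' \<in> ?D"
    if "U1' \<in> T'" "U2' \<in> T'" for U1' U2'
  proof -
    have "?sh ` U1' \<union> ?sh ` U2' = ?sh ` (U1' \<union> U2')" by (rule image_Un[symmetric])
    moreover have "?sh ` U1' \<inter> ?sh ` U2' = ?sh ` (U1' \<inter> U2')" by (rule image_Int[symmetric]) (simp add: inj_on_def)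
    ultimately show ?thesis using inB[OF is_topD(4)[OF T' that]] inB[OF is_topD(5)[OF T' that]] by simp
  qed
  have ui: "A \<union> B \<in> ?D \<and> A \<inter> B \<in> ?D" if h: "A \<in> ?D" "B \<in> ?D" for A B
    using h(1)
  proof (cases rule: down_mem)
    case (A U1)
    show ?thesis using h(2)
    proof (cases rule: down_mem)
      case (A U2)
      then show ?thesis using AA[of U1 U2] \<open>U1 \<in> T\<close> \<open>A = _\<close> by simp
    next
      case (B U2')
      then show ?thesis using AB[of U1 U2'] \<open>U1 \<in> T\<close> \<open>A = _\<close> by simp
    qed
  next
    case (B U1')
    show ?thesis using h(2)
    proof (cases rule: down_mem)
      case (A U2)
      then show ?thesis using AB[of U2 U1'] \<open>U1' \<in> T'\<close> \<open>A = _\<close> by (simp add: Un_commute Int_commute)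
    next
      case (B U2')
      then show ?thesis using BB[of U1' U2'] \<open>U1' \<in> T'\<close> \<open>A = _\<close> by simp
    qed
  qed
  show ?thesis unfolding is_top_def
  proof (intro conjI ballI)
    fix A B assume a: "A \<in> ?D" "B \<in> ?D"
    show "A \<union> B \<in> ?D" by (rule conjunct1[OF ui[OF a]])
    show "A \<inter> B \<in> ?D" by (rule conjunct2[OF ui[OF a]])
  qed (rule sub, rule e, rule f)
qed

lemma down_tle1:
  assumes T: "is_top n T" and T': "is_top n' T'" and ij: "i \<in> {1..n+n'}" "j \<in> {1..n+n'}"
    and R: "(i \<le> n \<and> j \<le> n \<and> tle T i j) \<or> (n < i \<and> n < j \<and> tle T' (i-n) (j-n)) \<or> (i \<le> n \<and> n < j)"
  shows "tle ((\<lambda>U. U \<union> (\<lambda>k. k+n) ` {1..n'}) ` T \<union> (\<lambda>U'. (\<lambda>k. k+n) ` U') ` T') i j"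
  unfolding tle_def
proof (intro ballI impI)
  let ?sh = "\<lambda>k::nat. k+n"
  fix V assume V: "V \<in> (\<lambda>U. U \<union> (\<lambda>k. k+n) ` {1..n'}) ` T \<union> (\<lambda>U'. (\<lambda>k. k+n) ` U') ` T'" "i \<in> V"
  from V(1) show "j \<in> V"
  proof (cases rule: down_mem)
    case (A U)
    have mem: "x \<in> V \<longleftrightarrow> (x \<le> n \<and> x \<in> U) \<or> (n < x \<and> x - n \<in> {1..n'})" for x
      unfolding A(2) by (rule memC[OF open_sub[OF T A(1)] order_refl])
    show ?thesis
    proof (cases "j \<le> n")
      case True
      then have a: "i \<le> n" "tle T i j" using R by auto
      have "i \<in> U" using a(1) mem V(2) by auto
      then have "j \<in> U" using open_up[OF A(1)] a(2) by blast
      then show ?thesis using mem True by blast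
    next
      case False
      then have "j - n \<in> {1..n'}" using ij by auto
      then show ?thesis using mem False by simp
    qed
  next
    case (B U')
    have mem: "x \<in> V \<longleftrightarrow> (n < x \<and> x - n \<in> U')" for x
      unfolding B(2) by (rule memS[OF open_sub[OF T' B(1)]])
    have i: "n < i" "i - n \<in> U'" using mem V(2) by auto
    then have a: "n < j" "tle T' (i-n) (j-n)" using R by auto
    then have "j - n \<in> U'" using open_up[OF B(1) i(2)] by blast
    then show ?thesis using mem a(1) by blast
  qed
qed

lemma down_tle2:
  assumes T: "is_top n T" and T': "is_top n' T'" and ij: "i \<in> {1..n+n'}" "j \<in> {1..n+n'}"
    and L: "tle ((\<lambda>U. U \<union> (\<lambda>k. k+n) ` {1..n'}) ` T \<union> (\<lambda>U'. (\<lambda>k. k+n) ` U') ` T') i j"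
  shows "(i \<le> n \<and> j \<le> n \<and> tle T i j) \<or> (n < i \<and> n < j \<and> tle T' (i-n) (j-n)) \<or> (i \<le> n \<and> n < j)"
proof -
  let ?sh = "\<lambda>k::nat. k+n"
  let ?D = "(\<lambda>U. U \<union> ?sh ` {1..n'}) ` T \<union> (\<lambda>U'. ?sh ` U') ` T'"
  have a: "\<forall>V\<in>?D. i \<in> V \<longrightarrow> j \<in> V" using L unfolding tle_def .
  have LA: "j \<in> U \<union> ?sh ` {1..n'}" if "U \<in> T" "i \<in> U \<union> ?sh ` {1..n'}" for U
  proof -
    have m: "U \<union> ?sh ` {1..n'} \<in> ?D" using that(1) by blast
    show ?thesis using bspec[OF a m] that(2) by (rule mp)
  qed
  have LB: "j \<in> ?sh ` U'" if "U' \<in> T'" "i \<in> ?sh ` U'" for U'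
  proof -
    have m: "?sh ` U' \<in> ?D" using that(1) by blast
    show ?thesis using bspec[OF a m] that(2) by (rule mp)
  qed
  show ?thesis
  proof (cases "i \<le> n")
    case a1: True
    show ?thesis
    proof (cases "j \<le> n")
      case True
      have "tle T i j" unfolding tle_def
      proof (intro ballI impI)
        fix U assume U: "U \<in> T" "i \<in> U"
        have m: "x \<in> U \<union> ?sh ` {1..n'} \<longleftrightarrow> (x \<le> n \<and> x \<in> U) \<or> (n < x \<and> x - n \<in> {1..n'})" for x
          by (rule memC[OF open_sub[OF T U(1)] order_refl])
        have "j \<in> U \<union> ?sh ` {1..n'}" using LA[OF U(1)] U(2) by simp
        then show "j \<in> U" using m[of j] True by simp
      qed
      then show ?thesis using a1 True by simp
    next
      case False
      then show ?thesis using a1 by simp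
    qed
  next
    case a1: False
    have m: "x \<in> ?sh ` {1..n'} \<longleftrightarrow> (n < x \<and> x - n \<in> {1..n'})" for x
      by (rule memS[OF order_refl])
    have "i \<in> ?sh ` {1..n'}" using a1 ij m[of i] by simp
    then have jn: "n < j" using LB[OF is_topD(3)[OF T']] m[of j] by simp
    have "tle T' (i-n) (j-n)" unfolding tle_def
    proof (intro ballI impI)
      fix U' assume U': "U' \<in> T'" "i - n \<in> U'"
      have m': "x \<in> ?sh ` U' \<longleftrightarrow> (n < x \<and> x - n \<in> U')" for x
        by (rule memS[OF open_sub[OF T' U'(1)]])
      have "i \<in> ?sh ` U'" using m'[of i] a1 U'(2) by simp
      then have "j \<in> ?sh ` U'" using LB[OF U'(1)] by simp
      then show "j - n \<in> U'" using m'[of j] by simp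
    qed
    then show ?thesis using a1 jn by simp
  qed
qed

lemma img_prod2: "(\<lambda>(V,V'). g V V') ` (h ` A \<times> h' ` B) = (\<lambda>(U,U'). g (h U) (h' U')) ` (A \<times> B)"
  by force

lemma img_img_prod: "(`) h ` ((\<lambda>(U,U'). g U U') ` (A \<times> B)) = (\<lambda>(U,U'). h ` g U U') ` (A \<times> B)"
  by force

lemma conc_tequiv:
  assumes T: "is_top n T" and T': "is_top n' T'" and ij: "i \<in> {1..n+n'}" "j \<in> {1..n+n'}"
  shows "tequiv ((\<lambda>(U,U'). U \<union> (\<lambda>k. k+n) ` U') ` (T \<times> T')) i j \<longleftrightarrow>
    (i \<le> n \<and> j \<le> n \<and> tequiv T i j) \<or> (n < i \<and> n < j \<and> tequiv T' (i-n) (j-n))"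
proof -
  have a: "tle ((\<lambda>(U,U'). U \<union> (\<lambda>k. k+n) ` U') ` (T \<times> T')) x y \<longleftrightarrow>
    (x \<le> n \<and> y \<le> n \<and> tle T x y) \<or> (n < x \<and> n < y \<and> tle T' (x-n) (y-n))"
    if "x \<in> {1..n+n'}" "y \<in> {1..n+n'}" for x y
    using conc_tle1[OF T T' that] conc_tle2[OF T T' that] by blast
  show ?thesis unfolding tequiv_def a[OF ij] a[OF ij(2,1)] by auto
qed

lemma down_tequiv:
  assumes T: "is_top n T" and T': "is_top n' T'" and ij: "i \<in> {1..n+n'}" "j \<in> {1..n+n'}"
  shows "tequiv ((\<lambda>U. U \<union> (\<lambda>k. k+n) ` {1..n'}) ` T \<union> (\<lambda>U'. (\<lambda>k. k+n) ` U') ` T') i j \<longleftrightarrow>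
    (i \<le> n \<and> j \<le> n \<and> tequiv T i j) \<or> (n < i \<and> n < j \<and> tequiv T' (i-n) (j-n))"
proof -
  have a: "tle ((\<lambda>U. U \<union> (\<lambda>k. k+n) ` {1..n'}) ` T \<union> (\<lambda>U'. (\<lambda>k. k+n) ` U') ` T') x y \<longleftrightarrow>
    (x \<le> n \<and> y \<le> n \<and> tle T x y) \<or> (n < x \<and> n < y \<and> tle T' (x-n) (y-n)) \<or> (x \<le> n \<and> n < y)"
    if "x \<in> {1..n+n'}" "y \<in> {1..n+n'}" for x y
    using down_tle1[OF T T' that] down_tle2[OF T T' that] by blast
  show ?thesis unfolding tequiv_def a[OF ij] a[OF ij(2,1)] by auto
qed

lemma cidx_shift_image:
  assumes T: "is_top n T" and T': "is_top n' T'"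
    and fC: "\<And>i. i \<in> {1..n+n'} \<Longrightarrow> fC i = (if i \<le> n then class_idx (n,T) i else class_idx (n',T') (i-n) + nclasses (n,T))"
  shows "U \<subseteq> {1..n} \<Longrightarrow> fC ` U = class_idx (n,T) ` U"
    "U' \<subseteq> {1..n'} \<Longrightarrow> fC ` ((\<lambda>k. k+n) ` U') = (\<lambda>k. k + nclasses (n,T)) ` (class_idx (n',T') ` U')"
proof -
  assume U: "U \<subseteq> {1..n}"
  show "fC ` U = class_idx (n,T) ` U"
  proof (rule image_cong[OF refl])
    fix x assume "x \<in> U" then have "x \<in> {1..n}" using U by blast
    then show "fC x = class_idx (n,T) x" using fC[of x] by simp
  qed
next
  assume U': "U' \<subseteq> {1..n'}"
  have "fC ` ((\<lambda>k. k+n) ` U') = (\<lambda>k. class_idx (n',T') k + nclasses (n,T)) ` U'"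
    unfolding image_image
  proof (rule image_cong[OF refl])
    fix x assume "x \<in> U'" then have "x \<in> {1..n'}" using U' by blast
    then show "fC (x + n) = class_idx (n',T') x + nclasses (n,T)" using fC[of "x+n"] by simp
  qed
  then show "fC ` ((\<lambda>k. k+n) ` U') = (\<lambda>k. k + nclasses (n,T)) ` (class_idx (n',T') ` U')"
    by (simp add: image_image)
qed

lemma conc_bar:
  assumes T: "is_top n T" and T': "is_top n' T'"
  shows "bar_top (conc_top (n,T) (n',T')) = conc_top (bar_top (n,T)) (bar_top (n',T'))"
    "cdef (conc_top (n,T) (n',T')) = cdef (n,T) + cdef (n',T')"
proof -
  let ?sh = "\<lambda>k::nat. k+n"
  let ?C = "(\<lambda>(U,U'). U \<union> ?sh ` U') ` (T \<times> T')"
  let ?f = "class_idx (n,T)" and ?f' = "class_idx (n',T')" and ?fC = "class_idx (n+n',?C)"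
  let ?k = "nclasses (n,T)" and ?k' = "nclasses (n',T')"
  have isC: "is_top (n+n') ?C" by (rule conc_is_top[OF T T'])
  note sp = split_cidx[OF T T', of ?C, OF conc_tequiv[OF T T']]
  have key: "?fC ` (U \<union> ?sh ` U') = ?f ` U \<union> (\<lambda>k. k + ?k) ` (?f' ` U')" if "U \<in> T" "U' \<in> T'" for U U'
    using cidx_shift_image(1)[OF T T' sp(2) open_sub[OF T that(1)]]
      cidx_shift_image(2)[OF T T' sp(2) open_sub[OF T' that(2)]] by (simp add: image_Un)
  have "(`) ?fC ` ?C = (\<lambda>(U,U'). ?f ` U \<union> (\<lambda>k. k + ?k) ` (?f' ` U')) ` (T \<times> T')"
    unfolding img_img_prod
  proof (rule image_cong[OF refl])
    fix p assume "p \<in> T \<times> T'"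
    then obtain U U' where p: "p = (U,U')" "U \<in> T" "U' \<in> T'" by blast
    show "(case p of (U,U') \<Rightarrow> ?fC ` (U \<union> ?sh ` U')) = (case p of (U,U') \<Rightarrow> ?f ` U \<union> (\<lambda>k. k + ?k) ` (?f' ` U'))"
      unfolding p(1) using key[OF p(2,3)] by simp
  qed
  also have "\<dots> = (\<lambda>(V,V'). V \<union> (\<lambda>k. k + ?k) ` V') ` ((`) ?f ` T \<times> (`) ?f' ` T')"
    by (rule img_prod2[symmetric])
  finally have eq: "(`) ?fC ` ?C = (\<lambda>(V,V'). V \<union> (\<lambda>k. k + ?k) ` V') ` ((`) ?f ` T \<times> (`) ?f' ` T')" .
  show "bar_top (conc_top (n,T) (n',T')) = conc_top (bar_top (n,T)) (bar_top (n',T'))"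
    unfolding conc_top_eq bar_top_eq[OF isC] bar_top_eq[OF T] bar_top_eq[OF T'] eq using sp(1) by simp
  show "cdef (conc_top (n,T) (n',T')) = cdef (n,T) + cdef (n',T')"
    unfolding conc_top_eq cdef_def fst_conv
    using sp(1) nclasses_le[of n T] nclasses_le[of n' T'] by simp
qed

lemma down_bar:
  assumes T: "is_top n T" and T': "is_top n' T'"
  shows "bar_top (down_top (n,T) (n',T')) = down_top (bar_top (n,T)) (bar_top (n',T'))"
    "cdef (down_top (n,T) (n',T')) = cdef (n,T) + cdef (n',T')"
proof -
  let ?sh = "\<lambda>k::nat. k+n"
  let ?D = "(\<lambda>U. U \<union> ?sh ` {1..n'}) ` T \<union> (\<lambda>U'. ?sh ` U') ` T'"
  let ?f = "class_idx (n,T)" and ?f' = "class_idx (n',T')" and ?fC = "class_idx (n+n',?D)"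
  let ?k = "nclasses (n,T)" and ?k' = "nclasses (n',T')"
  have isD: "is_top (n+n') ?D" by (rule down_is_top[OF T T'])
  note sp = split_cidx[OF T T', of ?D, OF down_tequiv[OF T T']]
  have keyA: "?fC ` (U \<union> ?sh ` {1..n'}) = ?f ` U \<union> (\<lambda>k. k + ?k) ` {1..?k'}" if "U \<in> T" for U
    using cidx_shift_image(1)[OF T T' sp(2) open_sub[OF T that(1)]]
      cidx_shift_image(2)[OF T T' sp(2) order_refl] cidx_range[of n' T'] by (simp add: image_Un)
  have keyB: "?fC ` (?sh ` U') = (\<lambda>k. k + ?k) ` (?f' ` U')" if "U' \<in> T'" for U'
    using cidx_shift_image(2)[OF T T' sp(2) open_sub[OF T' that(1)]] by simp
  have "(`) ?fC ` ?D = (\<lambda>U. ?f ` U \<union> (\<lambda>k. k + ?k) ` {1..?k'}) ` T \<union> (\<lambda>U'. (\<lambda>k. k + ?k) ` (?f' ` U')) ` T'"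
  proof -
    have "(\<lambda>U. ?fC ` (U \<union> ?sh ` {1..n'})) ` T = (\<lambda>U. ?f ` U \<union> (\<lambda>k. k + ?k) ` {1..?k'}) ` T"
      by (rule image_cong[OF refl]) (rule keyA)
    moreover have "(\<lambda>U'. ?fC ` (?sh ` U')) ` T' = (\<lambda>U'. (\<lambda>k. k + ?k) ` (?f' ` U')) ` T'"
      by (rule image_cong[OF refl]) (rule keyB)
    ultimately show ?thesis unfolding image_Un image_comp comp_def by simp
  qed
  also have "\<dots> = (\<lambda>V. V \<union> (\<lambda>k. k + ?k) ` {1..?k'}) ` ((`) ?f ` T) \<union> (\<lambda>V'. (\<lambda>k. k + ?k) ` V') ` ((`) ?f' ` T')"
    by (simp add: image_image)
  finally have eq: "(`) ?fC ` ?D = (\<lambda>V. V \<union> (\<lambda>k. k + ?k) ` {1..?k'}) ` ((`) ?f ` T) \<union> (\<lambda>V'. (\<lambda>k. k + ?k) ` V') ` ((`) ?f' ` T')" .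
  show "bar_top (down_top (n,T) (n',T')) = down_top (bar_top (n,T)) (bar_top (n',T'))"
    unfolding down_top_eq bar_top_eq[OF isD] bar_top_eq[OF T] bar_top_eq[OF T'] eq using sp(1) by simp
  show "cdef (down_top (n,T) (n',T')) = cdef (n,T) + cdef (n',T')"
    unfolding down_top_eq cdef_def fst_conv
    using sp(1) nclasses_le[of n T] nclasses_le[of n' T'] by simp
qed

lemma std_eq: "std_restr T Y = (card Y, (\<lambda>W. rank_in Y ` (W \<inter> Y)) ` T)"
  by (auto simp: std_restr_def)

lemma std_is_top:
  assumes T: "is_top n T" and Y: "Y \<subseteq> {1..n}"
  shows "is_top (card Y) ((\<lambda>W. rank_in Y ` (W \<inter> Y)) ` T)"
proof -
  let ?r = "rank_in Y"
  let ?S = "(\<lambda>W. ?r ` (W \<inter> Y)) ` T"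
  have fin: "finite Y" using Y finite_subset by blast
  have R: "?r ` Y = {1..card Y}" by (rule rank_image[OF fin])
  have inj: "inj_on ?r Y" by (rule rank_inj[OF fin])
  have sub: "?S \<subseteq> Pow {1..card Y}"
  proof
    fix V assume "V \<in> ?S"
    then obtain W where "V = ?r ` (W \<inter> Y)" by blast
    then have "V \<subseteq> ?r ` Y" by blast
    then show "V \<in> Pow {1..card Y}" using R by simp
  qed
  have e: "{} \<in> ?S" by (rule rev_image_eqI[OF is_topD(2)[OF T]]) simp
  have f: "{1..card Y} \<in> ?S"
  proof (rule rev_image_eqI[OF is_topD(3)[OF T]])
    have "{1..n} \<inter> Y = Y" using Y by blast
    then show "{1..card Y} = ?r ` ({1..n} \<inter> Y)" using R by simp
  qed
  have ui: "A \<union> B \<in> ?S \<and> A \<inter> B \<in> ?S" if h: "A \<in> ?S" "B \<in> ?S" for A B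
  proof -
    obtain W1 where 1: "W1 \<in> T" "A = ?r ` (W1 \<inter> Y)" using h(1) by blast
    obtain W2 where 2: "W2 \<in> T" "B = ?r ` (W2 \<inter> Y)" using h(2) by blast
    have "A \<union> B = ?r ` ((W1 \<union> W2) \<inter> Y)" unfolding 1(2) 2(2) by (simp add: Int_Un_distrib2 image_Un)
    then have u: "A \<union> B \<in> ?S" using is_topD(4)[OF T 1(1) 2(1)] by blast
    have "A \<inter> B = ?r ` ((W1 \<inter> W2) \<inter> Y)" unfolding 1(2) 2(2)
    proof -
      have "?r ` (W1 \<inter> Y) \<inter> ?r ` (W2 \<inter> Y) = ?r ` ((W1 \<inter> Y) \<inter> (W2 \<inter> Y))"
        by (rule inj_on_image_Int[OF inj, symmetric]) auto
      moreover have "(W1 \<inter> Y) \<inter> (W2 \<inter> Y) = (W1 \<inter> W2) \<inter> Y" by blast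
      ultimately show "?r ` (W1 \<inter> Y) \<inter> ?r ` (W2 \<inter> Y) = ?r ` ((W1 \<inter> W2) \<inter> Y)" by simp
    qed
    then have i: "A \<inter> B \<in> ?S" using is_topD(5)[OF T 1(1) 2(1)] by blast
    show ?thesis using u i by simp
  qed
  show ?thesis unfolding is_top_def
  proof (intro conjI ballI)
    fix A B assume a: "A \<in> ?S" "B \<in> ?S"
    show "A \<union> B \<in> ?S" by (rule conjunct1[OF ui[OF a]])
    show "A \<inter> B \<in> ?S" by (rule conjunct2[OF ui[OF a]])
  qed (rule sub, rule e, rule f)
qed

lemma std_tle:
  assumes Y: "Y \<subseteq> {1..n}" and xy: "x \<in> Y" "y \<in> Y"
  shows "tle ((\<lambda>W. rank_in Y ` (W \<inter> Y)) ` T) (rank_in Y x) (rank_in Y y) \<longleftrightarrow> tle T x y"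
proof -
  have fin: "finite Y" using Y finite_subset by blast
  have inj: "inj_on (rank_in Y) Y" by (rule rank_inj[OF fin])
  have S: "(\<lambda>W. rank_in Y ` (W \<inter> Y)) ` T = (`) (rank_in Y) ` ((\<lambda>W. W \<inter> Y) ` T)"
    by (simp add: image_image)
  have "tle ((`) (rank_in Y) ` ((\<lambda>W. W \<inter> Y) ` T)) (rank_in Y x) (rank_in Y y) \<longleftrightarrow> tle ((\<lambda>W. W \<inter> Y) ` T) x y"
  proof (rule tle_image[OF _ _ xy])
    show "\<forall>U\<in>(\<lambda>W. W \<inter> Y) ` T. U \<subseteq> Y" by blast
    show "\<forall>U\<in>(\<lambda>W. W \<inter> Y) ` T. \<forall>x\<in>U. \<forall>y\<in>Y. rank_in Y x = rank_in Y y \<longrightarrow> y \<in> U"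
    proof (intro ballI impI)
      fix U x' y' assume a: "U \<in> (\<lambda>W. W \<inter> Y) ` T" "x' \<in> U" "y' \<in> Y" "rank_in Y x' = rank_in Y y'"
      then have "x' \<in> Y" by blast
      then have "x' = y'" using inj_onD[OF inj a(4) _ a(3)] by blast
      then show "y' \<in> U" using a(2) by simp
    qed
  qed
  moreover have "tle ((\<lambda>W. W \<inter> Y) ` T) x y \<longleftrightarrow> tle T x y"
  proof
    assume h: "tle ((\<lambda>W. W \<inter> Y) ` T) x y"
    show "tle T x y" unfolding tle_def
    proof (intro ballI impI)
      fix U assume U: "U \<in> T" "x \<in> U"
      have "U \<inter> Y \<in> (\<lambda>W. W \<inter> Y) ` T" using U(1) by blast
      moreover have "x \<in> U \<inter> Y" using U(2) xy(1) by blast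
      ultimately have "y \<in> U \<inter> Y" using h unfolding tle_def by blast
      then show "y \<in> U" by blast
    qed
  next
    assume h: "tle T x y"
    show "tle ((\<lambda>W. W \<inter> Y) ` T) x y" unfolding tle_def
    proof (intro ballI impI)
      fix V assume V: "V \<in> (\<lambda>W. W \<inter> Y) ` T" "x \<in> V"
      then obtain W where W: "W \<in> T" "V = W \<inter> Y" by blast
      then have "y \<in> W" using h V(2) unfolding tle_def by blast
      then show "y \<in> V" using W(2) xy(2) by blast
    qed
  qed
  ultimately show ?thesis using S by simp
qed

lemma std_classes:
  assumes T: "is_top n T" and Y: "Y \<subseteq> {1..n}" and sY: "sat T Y"
  defines "ST \<equiv> (\<lambda>W. rank_in Y ` (W \<inter> Y)) ` T"
  shows "\<And>y. y \<in> Y \<Longrightarrow> fmu (card Y, ST) (rank_in Y y) = rank_in Y (fmu (n,T) y)"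
    "nclasses (card Y, ST) = card (fmu (n,T) ` Y)"
    "\<And>y. y \<in> Y \<Longrightarrow> class_idx (card Y, ST) (rank_in Y y) = rank_in (fmu (n,T) ` Y) (fmu (n,T) y)"
proof -
  let ?r = "rank_in Y"
  have fin: "finite Y" using Y finite_subset by blast
  have R: "?r ` Y = {1..card Y}" by (rule rank_image[OF fin])
  have inj: "inj_on ?r Y" by (rule rank_inj[OF fin])
  have teq: "tequiv ST (?r x) (?r y) \<longleftrightarrow> tequiv T x y" if "x \<in> Y" "y \<in> Y" for x y
    unfolding tequiv_def ST_def using std_tle[OF Y that] std_tle[OF Y that(2,1)] by simp
  have tc: "tclass (card Y, ST) (?r y) = ?r ` tclass (n,T) y" if y: "y \<in> Y" for y
  proof (intro equalityI subsetI)
    fix j assume "j \<in> tclass (card Y, ST) (?r y)"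
    then have j: "j \<in> {1..card Y}" "tequiv ST (?r y) j" by (simp_all add: tclass_eq')
    then obtain z where z: "z \<in> Y" "j = ?r z" using R by (metis imageE)
    then have "tequiv T y z" using teq[OF y z(1)] j(2) by simp
    moreover have "z \<in> {1..n}" using z(1) Y by blast
    ultimately have "z \<in> tclass (n,T) y" by (simp add: tclass_eq')
    then show "j \<in> ?r ` tclass (n,T) y" using z(2) by blast
  next
    fix j assume "j \<in> ?r ` tclass (n,T) y"
    then obtain z where z: "z \<in> tclass (n,T) y" "j = ?r z" by blast
    then have zz: "z \<in> {1..n}" "tequiv T y z" by (simp_all add: tclass_eq')
    then have zY: "z \<in> Y" using sY y unfolding sat_def by blast
    then have "j \<in> {1..card Y}" using R z(2) by blast
    moreover have "tequiv ST (?r y) j" using teq[OF y zY] zz(2) z(2) by simp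
    ultimately show "j \<in> tclass (card Y, ST) (?r y)" by (simp add: tclass_eq')
  qed
  show fm: "fmu (card Y, ST) (?r y) = ?r (fmu (n,T) y)" if y: "y \<in> Y" for y
  proof -
    have ne: "tclass (n,T) y \<noteq> {}" using tclass_self[of y n T] y Y by blast
    show ?thesis unfolding fmu_def tc[OF y]
      by (rule mono_Min_commute[symmetric, OF rank_mono'[OF fin] tclass_finite ne])
  qed
  have fY: "fmu (n,T) ` Y \<subseteq> Y" by (rule fmu_sat[OF Y sY])
  have MS: "fmu (card Y, ST) ` {1..card Y} = ?r ` (fmu (n,T) ` Y)"
  proof -
    have "fmu (card Y, ST) ` {1..card Y} = fmu (card Y, ST) ` (?r ` Y)" using R by simp
    also have "\<dots> = (\<lambda>y. ?r (fmu (n,T) y)) ` Y" unfolding image_image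
      by (rule image_cong[OF refl]) (rule fm)
    also have "\<dots> = ?r ` (fmu (n,T) ` Y)" by (simp add: image_image)
    finally show ?thesis .
  qed
  show "nclasses (card Y, ST) = card (fmu (n,T) ` Y)"
    unfolding nclasses_eq MS by (rule card_image[OF inj_on_subset[OF inj fY]])
  show "class_idx (card Y, ST) (?r y) = rank_in (fmu (n,T) ` Y) (fmu (n,T) y)" if y: "y \<in> Y" for y
  proof -
    have "class_idx (card Y, ST) (?r y) = rank_in (?r ` (fmu (n,T) ` Y)) (?r (fmu (n,T) y))"
      unfolding class_idx_eq MS fm[OF y] ..
    also have "\<dots> = rank_in (fmu (n,T) ` Y) (fmu (n,T) y)"
    proof (rule rank_transfer)
      show "finite (fmu (n,T) ` Y)" using fin by simp
      show "fmu (n,T) y \<in> fmu (n,T) ` Y" using y by simp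
      show "\<forall>x\<in>fmu (n,T) ` Y. \<forall>z\<in>fmu (n,T) ` Y. x < z \<longrightarrow> ?r x < ?r z"
        using rank_strict[OF fin] fY by blast
    qed
    finally show ?thesis .
  qed
qed

lemma cidx_via_fmu:
  assumes Y: "Y \<subseteq> {1..n}" and y: "y \<in> Y"
  shows "rank_in (class_idx (n,T) ` Y) (class_idx (n,T) y) = rank_in (fmu (n,T) ` Y) (fmu (n,T) y)"
    "card (class_idx (n,T) ` Y) = card (fmu (n,T) ` Y)"
proof -
  let ?M = "fmu (n,T) ` {1..n}"
  have finM: "finite ?M" by simp
  have sub: "fmu (n,T) ` Y \<subseteq> ?M" using Y by blast
  have fY: "class_idx (n,T) ` Y = rank_in ?M ` (fmu (n,T) ` Y)"
    unfolding class_idx_eq image_image ..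
  show "rank_in (class_idx (n,T) ` Y) (class_idx (n,T) y) = rank_in (fmu (n,T) ` Y) (fmu (n,T) y)"
    unfolding fY class_idx_eq
  proof (rule rank_transfer)
    show "finite (fmu (n,T) ` Y)" using finite_subset[OF sub finM] .
    show "fmu (n,T) y \<in> fmu (n,T) ` Y" using y by simp
    show "\<forall>x\<in>fmu (n,T) ` Y. \<forall>z\<in>fmu (n,T) ` Y. x < z \<longrightarrow> rank_in ?M x < rank_in ?M z"
    proof (intro ballI impI)
      fix x z assume xz: "x \<in> fmu (n,T) ` Y" "z \<in> fmu (n,T) ` Y" "x < z"
      have "x \<in> ?M" "z \<in> ?M" using xz(1,2) sub by (simp_all add: subsetD)
      then show "rank_in ?M x < rank_in ?M z" using rank_strict[OF finM _ _ xz(3)] by simp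
    qed
  qed
  show "card (class_idx (n,T) ` Y) = card (fmu (n,T) ` Y)"
    unfolding fY by (rule card_image[OF inj_on_subset[OF rank_inj[OF finM] sub]])
qed

lemma std_bar:
  assumes T: "is_top n T" and Y: "Y \<subseteq> {1..n}" and sY: "sat T Y"
  shows "bar_top (std_restr T Y) = std_restr ((`) (class_idx (n,T)) ` T) (class_idx (n,T) ` Y)"
    "nclasses (std_restr T Y) = card (fmu (n,T) ` Y)"
proof -
  let ?r = "rank_in Y" and ?f = "class_idx (n,T)"
  let ?ST = "(\<lambda>W. ?r ` (W \<inter> Y)) ` T"
  let ?h = "\<lambda>y. rank_in (fmu (n,T) ` Y) (fmu (n,T) y)"
  note sc = std_classes[OF T Y sY]
  have isS: "is_top (card Y) ?ST" by (rule std_is_top[OF T Y])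
  have A: "(`) (class_idx (card Y, ?ST)) ` ?ST = (\<lambda>W. ?h ` (W \<inter> Y)) ` T"
    unfolding image_image
  proof (rule image_cong[OF refl])
    fix W assume "W \<in> T"
    show "(\<lambda>x. class_idx (card Y, ?ST) (?r x)) ` (W \<inter> Y) = ?h ` (W \<inter> Y)"
      by (rule image_cong[OF refl]) (rule sc(3), blast)
  qed
  have B: "(\<lambda>V. rank_in (?f ` Y) ` (V \<inter> ?f ` Y)) ` ((`) ?f ` T) = (\<lambda>W. ?h ` (W \<inter> Y)) ` T"
    unfolding image_image
  proof (rule image_cong[OF refl])
    fix W assume W: "W \<in> T"
    have "?f ` W \<inter> ?f ` Y = ?f ` (W \<inter> Y)"
      by (rule cidx_Int[OF open_sub[OF T W] Y open_sat[OF W], symmetric])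
    then show "rank_in (?f ` Y) ` (?f ` W \<inter> ?f ` Y) = ?h ` (W \<inter> Y)"
      unfolding image_image
    proof -
      assume e: "?f ` W \<inter> ?f ` Y = ?f ` (W \<inter> Y)"
      have "rank_in (?f ` Y) ` (?f ` W \<inter> ?f ` Y) = (\<lambda>y. rank_in (?f ` Y) (?f y)) ` (W \<inter> Y)"
        unfolding e image_image ..
      also have "\<dots> = ?h ` (W \<inter> Y)"
        by (rule image_cong[OF refl]) (rule cidx_via_fmu(1)[OF Y], blast)
      finally show ?thesis .
    qed
  qed
  have C: "card (?f ` Y) = card (fmu (n,T) ` Y)"
  proof (cases "Y = {}")
    case False
    then obtain y where "y \<in> Y" by blast
    then show ?thesis by (rule cidx_via_fmu(2)[OF Y])
  qed simp
  show "nclasses (std_restr T Y) = card (fmu (n,T) ` Y)" unfolding std_eq by (rule sc(2))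
  show "bar_top (std_restr T Y) = std_restr ((`) ?f ` T) (?f ` Y)"
    unfolding std_eq[of T Y] bar_top_eq[OF isS] std_eq[of "(`) ?f ` T"] A B C sc(2) ..
qed

lemma coprod_term:
  assumes T: "is_top n T" and U: "U \<in> T"
  shows "std_restr (snd (bar_top (n,T))) ({1..fst (bar_top (n,T))} - class_idx (n,T) ` U) = bar_top (std_restr T ({1..n} - U))"
    "std_restr (snd (bar_top (n,T))) (class_idx (n,T) ` U) = bar_top (std_restr T U)"
    "cdef (n,T) = cdef (std_restr T ({1..n} - U)) + cdef (std_restr T U)"
proof -
  have Us: "U \<subseteq> {1..n}" by (rule open_sub[OF T U])
  have Cs: "{1..n} - U \<subseteq> {1..n}" by blast
  have sU: "sat T U" by (rule open_sat[OF U])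
  have sC: "sat T ({1..n} - U)" by (rule compl_sat[OF T U])
  show "std_restr (snd (bar_top (n,T))) (class_idx (n,T) ` U) = bar_top (std_restr T U)"
    unfolding bar_top_eq[OF T] snd_conv by (rule std_bar(1)[OF T Us sU, symmetric])
  show "std_restr (snd (bar_top (n,T))) ({1..fst (bar_top (n,T))} - class_idx (n,T) ` U) = bar_top (std_restr T ({1..n} - U))"
    unfolding bar_top_eq[OF T] snd_conv fst_conv cidx_diff[OF Us sU, symmetric] by (rule std_bar(1)[OF T Cs sC, symmetric])
  have fin: "finite U" "finite ({1..n} - U)" using Us finite_subset by auto
  have c1: "card ({1..n} - U) + card U = n"
    using card_Diff_subset[OF fin(1) Us] card_mono[OF _ Us] by simp
  have d: "fmu (n,T) ` ({1..n} - U) \<inter> fmu (n,T) ` U = {}"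
    using fmu_sat[OF Cs sC] fmu_sat[OF Us sU] by blast
  have "fmu (n,T) ` {1..n} = fmu (n,T) ` ({1..n} - U) \<union> fmu (n,T) ` U"
    using Us by blast
  then have c2: "nclasses (n,T) = card (fmu (n,T) ` ({1..n} - U)) + card (fmu (n,T) ` U)"
    unfolding nclasses_eq using card_Un_disjoint[OF _ _ d] fin by simp
  have le1: "card (fmu (n,T) ` ({1..n} - U)) \<le> card ({1..n} - U)" by (rule card_image_le[OF fin(2)])
  have le2: "card (fmu (n,T) ` U) \<le> card U" by (rule card_image_le[OF fin(1)])
  have e1: "cdef (std_restr T ({1..n} - U)) = card ({1..n} - U) - card (fmu (n,T) ` ({1..n} - U))"
    unfolding cdef_def std_bar(2)[OF T Cs sC] by (simp add: std_eq)
  have e2: "cdef (std_restr T U) = card U - card (fmu (n,T) ` U)"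
    unfolding cdef_def std_bar(2)[OF T Us sU] by (simp add: std_eq)
  show "cdef (n,T) = cdef (std_restr T ({1..n} - U)) + cdef (std_restr T U)"
  proof -
    have "cdef (n,T) = n - nclasses (n,T)" by (simp add: cdef_def)
    then show ?thesis using e1 e2 c1 c2 le1 le2 by linarith
  qed
qed

lemma topologiesD: "a \<in> topologies \<Longrightarrow> is_top (fst a) (snd a)"
  by (auto simp: topologies_def)

lemma bar_in_T0: assumes "a \<in> topologies" shows "bar_top a \<in> T0_topologies"
proof -
  obtain n T where a: "a = (n,T)" by (cases a)
  have T: "is_top n T" using topologiesD[OF assms] a by simp
  have "is_top (fst (bar_top (n,T))) (snd (bar_top (n,T)))"
    unfolding bar_top_eq[OF T] using bar_is_top[OF T] by simp
  then have "bar_top (n,T) \<in> topologies" by (cases "bar_top (n,T)") (simp add: topologies_def)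
  then show ?thesis using bar_T0[OF T] a by (simp add: T0_topologies_def)
qed

lemma T0_fix: assumes "a \<in> T0_topologies" shows "bar_top a = a" "cdef a = 0"
proof -
  obtain n T where a: "a = (n,T)" by (cases a)
  have T: "is_top n T" and T0: "is_T0 (n,T)" using assms a by (auto simp: T0_topologies_def topologies_def)
  show "bar_top a = a" "cdef a = 0" using bar_T0_id[OF T T0] a by simp_all
qed

lemma theta_in_SP: assumes "x \<in> H_T" shows "theta q x \<in> H_SP"
proof -
  have "Poly_Mapping.keys (theta q x) \<subseteq> (\<Union>a\<in>Poly_Mapping.keys x. Poly_Mapping.keys (Poly_Mapping.single (bar_top a) (Poly_Mapping.lookup x a * q ^ cdef a)))"
    unfolding theta_def by (rule keys_sum)
  also have "\<dots> \<subseteq> bar_top ` Poly_Mapping.keys x" by auto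
  also have "\<dots> \<subseteq> T0_topologies" using assms bar_in_T0 by (auto simp: H_T_def)
  finally show ?thesis by (simp add: H_SP_def)
qed

lemma theta_id: assumes "x \<in> H_SP" shows "theta q x = x"
proof -
  have "theta q x = (\<Sum>a\<in>Poly_Mapping.keys x. Poly_Mapping.single a (Poly_Mapping.lookup x a))"
    unfolding theta_def
  proof (rule sum.cong[OF refl])
    fix a assume "a \<in> Poly_Mapping.keys x"
    then have "a \<in> T0_topologies" using assms by (auto simp: H_SP_def)
    then show "Poly_Mapping.single (bar_top a) (Poly_Mapping.lookup x a * q ^ cdef a) = Poly_Mapping.single a (Poly_Mapping.lookup x a)"
      using T0_fix by simp
  qed
  then show ?thesis by (simp add: sum_monomials)
qed

lemma SP_sub_T: "H_SP \<subseteq> H_T"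
  by (auto simp: H_SP_def H_T_def T0_topologies_def)

lemma one_in_SP: "(one_T :: topo \<Rightarrow>\<^sub>0 'k::field) \<in> H_SP"
proof -
  have "is_top 0 {{}}" by (auto simp: is_top_def)
  moreover have "is_T0 (0, {{}})" by (simp add: is_T0_def)
  ultimately have "(0, {{}}) \<in> T0_topologies" by (simp add: T0_topologies_def topologies_def)
  then show ?thesis by (simp add: H_SP_def one_T_def)
qed

lemma prod_hom:
  fixes q :: "'k::field"
  assumes H: "\<And>a b. a \<in> topologies \<Longrightarrow> b \<in> topologies \<Longrightarrow> bar_top (h a b) = h (bar_top a) (bar_top b) \<and> cdef (h a b) = cdef a + cdef b"
    and x: "x \<in> H_T" and y: "y \<in> H_T"
  shows "theta q (bilin h x y) = bilin h (theta q x) (theta q y)"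
proof -
  let ?w = "\<lambda>a. q ^ cdef a"
  let ?F = "\<lambda>a c. Poly_Mapping.single (bar_top a) (c * ?w a)"
  have ad: "additive ?F" by (rule additive_single)
  have "theta q (bilin h x y) = (\<Sum>a\<in>Poly_Mapping.keys x. \<Sum>b\<in>Poly_Mapping.keys y.
      Poly_Mapping.single (bar_top (h a b)) (Poly_Mapping.lookup x a * Poly_Mapping.lookup y b * ?w (h a b)))"
    unfolding theta_linext bilin_def linext_sum[OF ad] linext_single[OF ad] ..
  also have "\<dots> = (\<Sum>a\<in>Poly_Mapping.keys x. \<Sum>b\<in>Poly_Mapping.keys y.
      bilin h (Poly_Mapping.single (bar_top a) (Poly_Mapping.lookup x a * ?w a))
              (Poly_Mapping.single (bar_top b) (Poly_Mapping.lookup y b * ?w b)))"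
  proof (intro sum.cong refl)
    fix a b assume a: "a \<in> Poly_Mapping.keys x" and b: "b \<in> Poly_Mapping.keys y"
    have "a \<in> topologies" "b \<in> topologies" using a b x y by (auto simp: H_T_def)
    note hh = H[OF this]
    show "Poly_Mapping.single (bar_top (h a b)) (Poly_Mapping.lookup x a * Poly_Mapping.lookup y b * ?w (h a b)) =
      bilin h (Poly_Mapping.single (bar_top a) (Poly_Mapping.lookup x a * ?w a))
              (Poly_Mapping.single (bar_top b) (Poly_Mapping.lookup y b * ?w b))"
      unfolding bilin_single using hh by (simp add: power_add ac_simps)
  qed
  also have "\<dots> = bilin h (theta q x) (theta q y)"
    unfolding theta_def bilin_sum1 bilin_sum2 by (rule sum.swap)
  finally show ?thesis .
qed

lemma conc_hom: "a \<in> topologies \<Longrightarrow> b \<in> topologies \<Longrightarrow>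
  bar_top (conc_top a b) = conc_top (bar_top a) (bar_top b) \<and> cdef (conc_top a b) = cdef a + cdef b"
  using conc_bar[of "fst a" "snd a" "fst b" "snd b"] topologiesD by (cases a, cases b) auto

lemma down_hom: "a \<in> topologies \<Longrightarrow> b \<in> topologies \<Longrightarrow>
  bar_top (down_top a b) = down_top (bar_top a) (bar_top b) \<and> cdef (down_top a b) = cdef a + cdef b"
  using down_bar[of "fst a" "snd a" "fst b" "snd b"] topologiesD by (cases a, cases b) auto

definition Cf :: "topo \<Rightarrow> 'k::field \<Rightarrow> (topo \<times> topo \<Rightarrow>\<^sub>0 'k)" where
  "Cf a c = (\<Sum>U\<in>snd a. Poly_Mapping.single (std_restr (snd a) ({1..fst a} - U), std_restr (snd a) U) c)"

lemma coprod_basis: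
  fixes q :: "'k::field"
  assumes "a \<in> topologies"
  shows "Cf (bar_top a) (c * q ^ cdef a) = theta2 q (Cf a c)"
proof -
  obtain n T where a: "a = (n,T)" by (cases a)
  have T: "is_top n T" using topologiesD[OF assms] a by simp
  let ?f = "class_idx (n,T)"
  let ?G = "\<lambda>p c. Poly_Mapping.single (bar_top (fst p), bar_top (snd p)) (c * (q ^ cdef (fst p) * q ^ cdef (snd p)))"
  have ad: "additive ?G" by (rule additive_single)
  have inj: "inj_on ((`) ?f) T"
  proof (rule inj_onI)
    fix U V assume "U \<in> T" "V \<in> T" "?f ` U = ?f ` V"
    then show "U = V" using cidx_inj_sat[OF open_sub[OF T] open_sub[OF T] open_sat open_sat] by blast
  qed
  have "Cf (bar_top a) (c * q ^ cdef a) = (\<Sum>V\<in>(`) ?f ` T.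
      Poly_Mapping.single (std_restr (snd (bar_top (n,T))) ({1..fst (bar_top (n,T))} - V), std_restr (snd (bar_top (n,T))) V) (c * q ^ cdef (n,T)))"
    unfolding Cf_def a by (simp only: bar_top_eq[OF T] snd_conv)
  also have "\<dots> = (\<Sum>U\<in>T.
      Poly_Mapping.single (std_restr (snd (bar_top (n,T))) ({1..fst (bar_top (n,T))} - ?f ` U), std_restr (snd (bar_top (n,T))) (?f ` U)) (c * q ^ cdef (n,T)))"
    by (rule sum.reindex[OF inj, unfolded comp_def])
  also have "\<dots> = (\<Sum>U\<in>T. ?G (std_restr T ({1..n} - U), std_restr T U) c)"
  proof (rule sum.cong[OF refl])
    fix U assume U: "U \<in> T"
    note ct = coprod_term[OF T U]
    show "Poly_Mapping.single (std_restr (snd (bar_top (n,T))) ({1..fst (bar_top (n,T))} - ?f ` U), std_restr (snd (bar_top (n,T))) (?f ` U)) (c * q ^ cdef (n,T))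
      = ?G (std_restr T ({1..n} - U), std_restr T U) c"
      unfolding ct(1) ct(2) ct(3) by (simp add: power_add)
  qed
  also have "\<dots> = theta2 q (Cf a c)"
    unfolding theta2_linext Cf_def a linext_sum[OF ad] linext_single[OF ad] fst_conv snd_conv ..
  finally show ?thesis .
qed

lemma coprod_hom:
  fixes q :: "'k::field"
  assumes x: "x \<in> H_T"
  shows "coprod (theta q x) = theta2 q (coprod x)"
proof -
  have adC: "additive Cf" unfolding Cf_def by (rule additive_coprod)
  have cl: "coprod = linext Cf" unfolding coprod_linext Cf_def ..
  have ad2: "additive (\<lambda>p c. Poly_Mapping.single (bar_top (fst p), bar_top (snd p)) (c * (q ^ cdef (fst p) * q ^ cdef (snd p))))"
    by (rule additive_single)
  have "coprod (theta q x) = (\<Sum>a\<in>Poly_Mapping.keys x. Cf (bar_top a) (Poly_Mapping.lookup x a * q ^ cdef a))"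
    unfolding cl theta_def linext_sum[OF adC] linext_single[OF adC] ..
  also have "\<dots> = (\<Sum>a\<in>Poly_Mapping.keys x. theta2 q (Cf a (Poly_Mapping.lookup x a)))"
  proof (rule sum.cong[OF refl])
    fix a assume "a \<in> Poly_Mapping.keys x"
    then have "a \<in> topologies" using x by (auto simp: H_T_def)
    then show "Cf (bar_top a) (Poly_Mapping.lookup x a * q ^ cdef a) = theta2 q (Cf a (Poly_Mapping.lookup x a))"
      by (rule coprod_basis)
  qed
  also have "\<dots> = theta2 q (coprod x)"
    unfolding cl linext_def[of Cf x] theta2_linext linext_sum[OF ad2] ..
  finally show ?thesis .
qed

theorem proposition8:
  fixes q :: "'k::field"
  shows "(\<forall>x \<in> H_T. theta q x \<in> H_SP)
    \<and> theta q ` H_T = (H_SP :: (topo \<Rightarrow>\<^sub>0 'k) set)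
    \<and> theta q one_T = one_T
    \<and> (\<forall>x \<in> H_T. \<forall>y \<in> H_T. theta q (conc_prod x y) = conc_prod (theta q x) (theta q y))
    \<and> (\<forall>x \<in> H_T. \<forall>y \<in> H_T. theta q (down_prod x y) = down_prod (theta q x) (theta q y))
    \<and> (\<forall>x \<in> H_T. coprod (theta q x) = theta2 q (coprod x))"
proof (intro conjI ballI)
  show "theta q x \<in> H_SP" if "x \<in> H_T" for x using theta_in_SP[OF that] .
  show "theta q ` H_T = (H_SP :: (topo \<Rightarrow>\<^sub>0 'k) set)"
  proof
    show "theta q ` H_T \<subseteq> (H_SP :: (topo \<Rightarrow>\<^sub>0 'k) set)" using theta_in_SP by blast
    show "(H_SP :: (topo \<Rightarrow>\<^sub>0 'k) set) \<subseteq> theta q ` H_T"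
    proof
      fix x :: "topo \<Rightarrow>\<^sub>0 'k" assume "x \<in> H_SP"
      then show "x \<in> theta q ` H_T" using theta_id[of x q] SP_sub_T by (metis image_eqI subsetD)
    qed
  qed
  show "theta q one_T = one_T" by (rule theta_id[OF one_in_SP])
  show "theta q (conc_prod x y) = conc_prod (theta q x) (theta q y)" if "x \<in> H_T" "y \<in> H_T" for x y
    unfolding conc_prod_def by (rule prod_hom[OF conc_hom that])
  show "theta q (down_prod x y) = down_prod (theta q x) (theta q y)" if "x \<in> H_T" "y \<in> H_T" for x y
    unfolding down_prod_def by (rule prod_hom[OF down_hom that])
  show "coprod (theta q x) = theta2 q (coprod x)" if "x \<in> H_T" for x by (rule coprod_hom[OF that])
qed

end
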